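(* The \textsc{Lcp} problem (Alice holds a string $A$, Bob holds a string $B$, and they must determine $\ell=\mathrm{LCP}(A,B)$) has a randomized public-coin communication protocol using $O(\lg z)$ rounds and $O(\lg \ell)$ total bits of communication, where $\ell\le n$ is the length of the longest common prefix of $A$ and $B$ and $z\le \ell$ is the number of phrases in the LZ77 parse (without self-references) of this prefix.
   Context: Strings are over a finite alphabet $\Sigma$ known to both parties; $n$ bounds the string lengths. For strings $X,Y$, $\mathrm{LCP}(X,Y)$ is the largest $\ell\ge 0$ with $X[1..\ell]=Y[1..\ell]$. The LZ77 parse of a string $S$ divides $S$ greedily from left to right into phrases $f_1f_2\cdots f_z$: the $i$-th phrase, starting at position $u_i$, is the longest substring having an occurrence (its source) starting to the left of $u_i$, followed by the next symbol. It is represented by a tuple $(s_i,l_i,\alpha_i)$, where $s_i$ is the start of the earlier occurrence, $l_i$ its length and $\alpha_i$ the symbol at position $u_i+l_i$; $s_1=l_1=0$, $u_1=1$, and the phrase ends at $e_i=u_i+l_i$. "Without self-references" means each source may not overlap its phrase: $s_i+l_i\le u_i$. The parties use a fixed deterministic rule (e.g. always the leftmost source) so equal strings get equal parses. In the public-coin randomized model the parties share an infinite string of independent unbiased random bits, are otherwise deterministic, and the output must be correct on every input with probability at least a fixed constant greater than $1/2$. A round is one message; communication is the total number of bits sent. *)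

theory Defs
  imports "HOL-Probability.Probability"
begin

text \<open>Strings are lists over a finite alphabet (type class finite); positions 0-based.\<close>

definition lcp :: "'a list \<Rightarrow> 'a list \<Rightarrow> nat" where
  "lcp A B = (GREATEST l. l \<le> length A \<and> l \<le> length B \<and> take l A = take l B)"

text \<open>The factor S[u..u+l) has an earlier, non-overlapping occurrence starting at s:
  s + l \<le> u (no self-reference).\<close>
definition has_src :: "'a list \<Rightarrow> nat \<Rightarrow> nat \<Rightarrow> bool" where
  "has_src S u l \<longleftrightarrow> (\<exists>s. s + l \<le> u \<and> take l (drop s S) = take l (drop u S))"

text \<open>Length of the LZ77 phrase starting at u: the longest copyable factor plus the
  following symbol (which must exist).\<close>
definition phrase_len :: "'a list \<Rightarrow> nat \<Rightarrow> nat" where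
  "phrase_len S u = Suc (GREATEST l. l < length S - u \<and> has_src S u l)"

function lz_count_from :: "'a list \<Rightarrow> nat \<Rightarrow> nat" where
  "lz_count_from S u =
     (if length S \<le> u then 0 else Suc (lz_count_from S (u + phrase_len S u)))"
  by auto
termination
  by (relation "Wellfounded.measure (\<lambda>(S, u). length S - u)") (auto simp: phrase_len_def)

definition lz_phrases :: "'a list \<Rightarrow> nat" where
  "lz_phrases S = lz_count_from S 0"

text \<open>Given the public coins and the
  transcript so far, turn says who speaks next (Some True = Alice, Some False = Bob)
  or that the protocol has halted (None).\<close>
record 'a protocol =
  turn :: "(nat \<Rightarrow> bool) \<Rightarrow> bool list list \<Rightarrow> bool option"
  alice_msg :: "'a list \<Rightarrow> (nat \<Rightarrow> bool) \<Rightarrow> bool list list \<Rightarrow> bool list"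
  bob_msg :: "'a list \<Rightarrow> (nat \<Rightarrow> bool) \<Rightarrow> bool list list \<Rightarrow> bool list"
  outp :: "(nat \<Rightarrow> bool) \<Rightarrow> bool list list \<Rightarrow> nat"

fun transcript :: "'a protocol \<Rightarrow> 'a list \<Rightarrow> 'a list \<Rightarrow> (nat \<Rightarrow> bool) \<Rightarrow> nat \<Rightarrow> bool list list" where
  "transcript P A B r 0 = []"
| "transcript P A B r (Suc k) =
     (let t = transcript P A B r k in
      case turn P r t of
        None \<Rightarrow> t
      | Some True \<Rightarrow> t @ [alice_msg P A r t]
      | Some False \<Rightarrow> t @ [bob_msg P B r t])"

text \<open>A run on coins r halts with output ans using at most R rounds (messages) and at most
  Bits bits of communication in total.\<close>
definition good_run ::
  "'a protocol \<Rightarrow> 'a list \<Rightarrow> 'a list \<Rightarrow> nat \<Rightarrow> real \<Rightarrow> real \<Rightarrow> (nat \<Rightarrow> bool) \<Rightarrow> bool" where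
  "good_run P A B ans R Bits r \<longleftrightarrow>
     (\<exists>k. let t = transcript P A B r k in
          turn P r t = None \<and> outp P r t = ans \<and>
          real (length t) \<le> R \<and> real (sum_list (map length t)) \<le> Bits)"

definition coins :: "(nat \<Rightarrow> bool) measure" where
  "coins = (\<Pi>\<^sub>M i\<in>(UNIV :: nat set). measure_pmf (bernoulli_pmf (1/2)))"

end

theory Submission
  imports Defs "HOL-Library.Countable"
begin


definition U :: "nat \<Rightarrow> bool list set" where "U m = {xs. length xs = m}"

lemma finite_U[simp]: "finite (U m)"
  unfolding U_def using finite_lists_length_eq[of "UNIV::bool set" m] by simp

lemma card_U: "card (U m) = 2^m"
  unfolding U_def using card_lists_length_eq[of "UNIV::bool set" m] by simp

definition cyl :: "nat \<Rightarrow> bool list \<Rightarrow> (nat \<Rightarrow> bool) set" where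
  "cyl m xs = {r. map r [0..<m] = xs}"

lemma space_coins: "space coins = UNIV"
  unfolding coins_def by (simp add: space_PiM)

lemma cyl_emb: "length xs = m \<Longrightarrow> cyl m xs = prod_emb UNIV (\<lambda>i. measure_pmf (bernoulli_pmf (1/2))) {..<m} (Pi\<^sub>E {..<m} (\<lambda>i. {xs!i}))"
  unfolding cyl_def prod_emb_def
  by (auto simp: PiE_iff restrict_def list_eq_iff_nth_eq)

lemma emeasure_cyl: assumes "length xs = m" shows "emeasure coins (cyl m xs) = ennreal ((1/2)^m)"
proof -
  have "emeasure coins (cyl m xs) = (\<Prod>i\<in>{..<m}. emeasure (measure_pmf (bernoulli_pmf (1/2))) {xs!i})"
    unfolding coins_def cyl_emb[OF assms]
    by (rule emeasure_PiM_emb) (auto intro: measure_pmf.prob_space_axioms)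
  also have "\<dots> = (\<Prod>i\<in>{..<m}. ennreal (1/2))"
    by (intro prod.cong refl) (auto simp: emeasure_pmf_single)
  also have "\<dots> = ennreal (\<Prod>i\<in>{..<m}. 1/2)"
    by (rule prod_ennreal) simp
  finally show ?thesis by simp
qed

lemma cyl_sets: "length xs = m \<Longrightarrow> cyl m xs \<in> sets coins"
  by (rule emeasure_neq_0_sets) (simp add: emeasure_cyl)

lemma measure_cyl: "length xs = m \<Longrightarrow> measure coins (cyl m xs) = (1/2)^m"
  by (simp add: measure_def emeasure_cyl)

interpretation C: prob_space coins
  unfolding coins_def by (rule prob_space_PiM) (auto intro: measure_pmf.prob_space_axioms)

definition Pr :: "nat \<Rightarrow> (bool list \<Rightarrow> bool) \<Rightarrow> real" where
  "Pr m Q = real (card {xs \<in> U m. Q xs}) / 2^m"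

lemma bridge: "measure coins {r \<in> space coins. Q (map r [0..<m])} = Pr m Q"
proof -
  have eq: "{r \<in> space coins. Q (map r [0..<m])} = (\<Union>xs\<in>{xs \<in> U m. Q xs}. cyl m xs)"
    by (auto simp: space_coins cyl_def U_def)
  have fin: "finite {xs \<in> U m. Q xs}" by (rule finite_subset[OF _ finite_U[of m]]) auto
  have "measure coins (\<Union>xs\<in>{xs \<in> U m. Q xs}. cyl m xs) = (\<Sum>xs\<in>{xs \<in> U m. Q xs}. measure coins (cyl m xs))"
    by (rule C.finite_measure_finite_Union) (use fin cyl_sets[unfolded cyl_def] in \<open>auto simp: U_def\<close>, auto simp: disjoint_family_on_def cyl_def)
  also have "\<dots> = (\<Sum>xs\<in>{xs \<in> U m. Q xs}. (1/2)^m)"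
    by (intro sum.cong refl) (auto simp: U_def measure_cyl)
  finally show ?thesis using eq by (simp add: Pr_def power_divide)
qed


definition Av :: "nat \<Rightarrow> (bool list \<Rightarrow> real) \<Rightarrow> real" where
  "Av m f = (\<Sum>xs\<in>U m. f xs) / 2^m"

lemma sum_U_split: "(\<Sum>xs\<in>U (a+b). f xs) = (\<Sum>ys\<in>U a. \<Sum>zs\<in>U b. f (ys@zs))"
proof -
  have bij: "bij_betw (\<lambda>(ys,zs). ys@zs) (U a \<times> U b) (U (a+b))"
  proof (rule bij_betwI[where g="\<lambda>xs. (take a xs, drop a xs)"])
  qed (auto simp: U_def)
  have "(\<Sum>xs\<in>U (a+b). f xs) = (\<Sum>p\<in>U a \<times> U b. f ((\<lambda>(ys,zs). ys@zs) p))"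
    using sum.reindex_bij_betw[OF bij, of f] by simp
  also have "\<dots> = (\<Sum>ys\<in>U a. \<Sum>zs\<in>U b. f (ys@zs))"
    by (subst sum.cartesian_product) (simp add: case_prod_beta)
  finally show ?thesis .
qed

lemma Av_split: "Av (a+b) f = Av a (\<lambda>ys. Av b (\<lambda>zs. f (ys@zs)))"
  unfolding Av_def sum_U_split by (simp add: sum_divide_distrib power_add divide_divide_eq_left mult.commute)

lemma Av_mono: "(\<And>xs. length xs = m \<Longrightarrow> f xs \<le> g xs) \<Longrightarrow> Av m f \<le> Av m g"
  unfolding Av_def by (intro divide_right_mono sum_mono) (auto simp: U_def)

lemma Av_const[simp]: "Av m (\<lambda>_. c) = c"
  unfolding Av_def by (simp add: card_U)

lemma Av_add: "Av m (\<lambda>x. f x + g x) = Av m f + Av m g"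
  unfolding Av_def by (simp add: sum.distrib add_divide_distrib)

lemma Av_cmult: "Av m (\<lambda>x. c * f x) = c * Av m f"
  unfolding Av_def by (simp add: sum_distrib_left)

lemma Av_cong: "(\<And>xs. length xs = m \<Longrightarrow> f xs = g xs) \<Longrightarrow> Av m f = Av m g"
  unfolding Av_def by (intro arg_cong2[where f="(/)"] sum.cong) (auto simp: U_def)

lemma Pr_Ex: "Pr m Q = Av m (\<lambda>xs. if Q xs then 1 else 0)"
proof -
  have "(\<Sum>xs\<in>U m. if Q xs then 1 else 0 :: real) = real (card {xs \<in> U m. Q xs})"
    by (simp add: sum.If_cases Int_def)
  then show ?thesis unfolding Pr_def Av_def by simp
qed

lemma Av_prefix: "(\<And>ys zs. length ys = a \<Longrightarrow> f (ys@zs) = g ys) \<Longrightarrow> Av (a+b) f = Av a g"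
  by (simp add: Av_split) (rule Av_cong, simp)

lemma Pr_mono: "(\<And>xs. length xs = m \<Longrightarrow> P xs \<Longrightarrow> Q xs) \<Longrightarrow> Pr m P \<le> Pr m Q"
  unfolding Pr_Ex by (rule Av_mono) auto

lemma Pr_union: "Pr m (\<lambda>xs. P xs \<or> Q xs) \<le> Pr m P + Pr m Q"
  unfolding Pr_Ex Av_add[symmetric] by (rule Av_mono) auto

lemma Pr_compl: "Pr m (\<lambda>xs. \<not> P xs) = 1 - Pr m P"
proof -
  have "Pr m (\<lambda>xs. \<not> P xs) = Av m (\<lambda>xs. 1 + (-1) * (if P xs then 1 else 0))"
    unfolding Pr_Ex by (rule Av_cong) auto
  then show ?thesis unfolding Pr_Ex Av_add Av_cmult by simp
qed

lemma Pr_ge0: "0 \<le> Pr m P" unfolding Pr_def by simp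

lemma card_match:
  fixes p q :: "nat \<Rightarrow> nat"
  assumes "inj_on p {..<b}" "inj_on q {..<b}" "\<And>k k'. k < b \<Longrightarrow> k' < b \<Longrightarrow> p k \<noteq> q k'"
    "\<And>k. k < b \<Longrightarrow> p k < m \<and> q k < m"
  shows "real (card {xs \<in> U m. \<forall>k<b. xs!p k = xs!q k}) * 2^b = 2^m"
  using assms
proof (induction b)
  case 0
  then show ?case by (simp add: card_U)
next
  case (Suc b)
  define S where "S = {xs \<in> U m. \<forall>k<b. xs!p k = xs!q k}"
  define E where "E = {xs::bool list. xs!p b = xs!q b}"
  define fl where "fl = (\<lambda>xs::bool list. xs[q b := \<not> xs!q b])"
  have IH: "real (card S) * 2^b = 2^m" unfolding S_def
    by (rule Suc.IH) (use Suc.prems in \<open>auto simp: inj_on_def\<close>)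
  have qb: "q b < m" "p b < m" using Suc.prems(4) by auto
  have qbne: "\<And>k. k < b \<Longrightarrow> q b \<noteq> p k \<and> q b \<noteq> q k" using Suc.prems(1-3)
    by (metis inj_onD lessThan_iff less_Suc_eq nat_neq_iff)
  have pq: "p b \<noteq> q b" using Suc.prems(3) by auto
  have fl_inv: "\<And>xs. fl (fl xs) = xs" unfolding fl_def
    by (case_tac "q b < length xs") (simp_all add: fl_def list_update_beyond not_less)
  have bij: "bij_betw fl (S \<inter> E) (S - E)"
  proof (rule bij_betwI[where g=fl])
    show "fl \<in> S \<inter> E \<rightarrow> S - E" using qb qbne pq by (auto simp: S_def E_def fl_def U_def nth_list_update)
    show "fl \<in> S - E \<rightarrow> S \<inter> E" using qb qbne pq by (auto simp: S_def E_def fl_def U_def nth_list_update)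
  qed (auto simp: fl_inv)
  have fS: "finite S" unfolding S_def by (rule finite_subset[OF _ finite_U[of m]]) auto
  have "card S = card (S \<inter> E) + card (S - E)"
    using fS by (metis Diff_Diff_Int Int_commute card_Diff_subset_Int card_Int_Diff finite_Int)
  moreover have "card (S - E) = card (S \<inter> E)" using bij_betw_same_card[OF bij] by simp
  moreover have "{xs \<in> U m. \<forall>k<Suc b. xs!p k = xs!q k} = S \<inter> E"
    by (auto simp: S_def E_def less_Suc_eq)
  ultimately show ?case using IH by simp
qed

lemma Pr_match:
  fixes p q :: "nat \<Rightarrow> nat"
  assumes "inj_on p {..<b}" "inj_on q {..<b}" "\<And>k k'. k < b \<Longrightarrow> k' < b \<Longrightarrow> p k \<noteq> q k'"
    "\<And>k. k < b \<Longrightarrow> p k < m \<and> q k < m"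
  shows "Pr m (\<lambda>xs. \<forall>k<b. xs!p k = xs!q k) = 1 / 2^b"
  using card_match[OF assms] unfolding Pr_def by (simp add: field_simps)


fun lcpr :: "'x list \<Rightarrow> 'x list \<Rightarrow> nat" where
  "lcpr (x#xs) (y#ys) = (if x = y then Suc (lcpr xs ys) else 0)"
| "lcpr _ _ = 0"

lemma lcpr_iff: "m \<le> lcpr X Y \<longleftrightarrow> m \<le> length X \<and> m \<le> length Y \<and> take m X = take m Y"
proof (induction X Y arbitrary: m rule: lcpr.induct)
  case (1 x xs y ys)
  then show ?case by (cases m) auto
qed auto

lemma lcp_eq: "lcp A B = lcpr A B"
  unfolding lcp_def
proof (rule Greatest_equality)
  show "lcpr A B \<le> length A \<and> lcpr A B \<le> length B \<and> take (lcpr A B) A = take (lcpr A B) B"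
    using lcpr_iff[of "lcpr A B" A B] by simp
qed (use lcpr_iff in blast)

lemma lcpr_le: "lcpr X Y \<le> length X" "lcpr X Y \<le> length Y"
  using lcpr_iff[of "lcpr X Y" X Y] by auto

lemma lcpr_take_eq: "take (lcpr X Y) X = take (lcpr X Y) Y"
  using lcpr_iff[of "lcpr X Y" X Y] by auto

definition mkA :: "'a list \<Rightarrow> ('a + bool) list" where "mkA A = map Inl A @ [Inr False]"
definition mkB :: "'a list \<Rightarrow> ('a + bool) list" where "mkB B = map Inl B @ [Inr True]"

lemma lcpr_mk: "lcpr (mkA A) (mkB B) = lcpr A B"
  unfolding mkA_def mkB_def
proof (induction A arbitrary: B)
  case Nil
  then show ?case by (cases B) auto
next
  case (Cons a A)
  then show ?case by (cases B) auto
qed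

lemma length_mk[simp]: "length (mkA A) = Suc (length A)" "length (mkB B) = Suc (length B)"
  by (auto simp: mkA_def mkB_def)

lemma lcpr_drop: "u \<le> lcpr X Y \<Longrightarrow> lcpr (drop u X) (drop u Y) = lcpr X Y - u"
proof (induction X Y arbitrary: u rule: lcpr.induct)
  case (1 x xs y ys)
  then show ?case by (cases u) (auto split: if_splits)
qed auto

lemma lcpr_take: "lcpr X (take k Y) = min (lcpr X Y) k"
proof (induction X Y arbitrary: k rule: lcpr.induct)
  case (1 x xs y ys)
  then show ?case by (cases k) auto
next
  case ("2_1" v)
  then show ?case by (cases k) auto
qed auto

lemma has_src_0: "has_src S u 0" unfolding has_src_def by auto

lemma has_src_mono: "has_src S u l \<Longrightarrow> l' \<le> l \<Longrightarrow> has_src S u l'"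
proof -
  assume h: "has_src S u l" and l: "l' \<le> l"
  then obtain s where s: "s + l \<le> u" "take l (drop s S) = take l (drop u S)" unfolding has_src_def by blast
  then have "take l' (take l (drop s S)) = take l' (take l (drop u S))" by simp
  then have "take l' (drop s S) = take l' (drop u S)" using l by (simp add: min_absorb1)
  then show ?thesis unfolding has_src_def using s l by (intro exI[of _ s]) simp
qed

lemma take_drop_take: "s + l \<le> m \<Longrightarrow> take l (drop s (take m S)) = take l (drop s S)"
  by (simp add: drop_take take_take min_def)

lemma has_src_local: "u + l \<le> m \<Longrightarrow> take m S = take m T \<Longrightarrow> has_src S u l = has_src T u l"
  unfolding has_src_def
proof (intro iffI; elim exE conjE)
  fix s assume a: "u + l \<le> m" "take m S = take m T" "s + l \<le> u" "take l (drop s S) = take l (drop u S)"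
  have "take l (drop s T) = take l (drop u T)"
    using a take_drop_take[of s l m S] take_drop_take[of u l m S] take_drop_take[of s l m T] take_drop_take[of u l m T]
    by simp
  then show "\<exists>s. s + l \<le> u \<and> take l (drop s T) = take l (drop u T)" using a by auto
next
  fix s assume a: "u + l \<le> m" "take m S = take m T" "s + l \<le> u" "take l (drop s T) = take l (drop u T)"
  have "take l (drop s S) = take l (drop u S)"
    using a take_drop_take[of s l m S] take_drop_take[of u l m S] take_drop_take[of s l m T] take_drop_take[of u l m T]
    by simp
  then show "\<exists>s. s + l \<le> u \<and> take l (drop s S) = take l (drop u S)" using a by auto
qed

definition lstar :: "'x list \<Rightarrow> nat \<Rightarrow> nat" where
  "lstar S u = (GREATEST l. l < length S - u \<and> has_src S u l)"

lemma phrase_len_lstar: "phrase_len S u = Suc (lstar S u)"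
  unfolding phrase_len_def lstar_def ..

lemma lstar_prop:
  assumes "u < length S"
  shows "lstar S u < length S - u" "has_src S u (lstar S u)"
    "\<And>l. l < length S - u \<Longrightarrow> has_src S u l \<Longrightarrow> l \<le> lstar S u"
proof -
  have ex: "0 < length S - u \<and> has_src S u 0" using assms has_src_0 by auto
  have bd: "\<forall>y. y < length S - u \<and> has_src S u y \<longrightarrow> y \<le> length S" by auto
  have "lstar S u < length S - u \<and> has_src S u (lstar S u)"
    unfolding lstar_def by (rule GreatestI_nat[where k=0 and b="length S"]) (use ex bd in auto)
  then show "lstar S u < length S - u" "has_src S u (lstar S u)" by auto
  show "\<And>l. l < length S - u \<Longrightarrow> has_src S u l \<Longrightarrow> l \<le> lstar S u"
    unfolding lstar_def by (rule Greatest_le_nat[where b="length S"]) (use bd in auto)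
qed

lemma lstar_local:
  assumes u: "u < length S" and e: "u + Suc (lstar S u) \<le> m" and m: "m < length S" "m \<le> length T"
    and t: "take m S = take m T"
  shows "lstar T u = lstar S u"
proof -
  let ?l = "lstar S u"
  have uT: "u < length T" using e m by simp
  have h1: "has_src T u ?l" using has_src_local[of u ?l m S T] lstar_prop(2)[OF u] e t by simp
  have lt: "Suc ?l < length S - u" using e m by linarith
  have n1: "\<not> has_src S u (Suc ?l)"
    using lstar_prop(3)[OF u, of "Suc ?l"] lt by auto
  have n2: "\<not> has_src T u (Suc ?l)" using has_src_local[of u "Suc ?l" m S T] n1 e t by simp
  have "\<And>l. l < length T - u \<Longrightarrow> has_src T u l \<Longrightarrow> l \<le> ?l"
    using n2 has_src_mono[of T u _ "Suc ?l"] by (meson not_less_eq_eq)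
  moreover have "?l < length T - u" using e m by simp
  ultimately have "lstar T u \<le> ?l" "?l \<le> lstar T u"
    using lstar_prop[OF uT] h1 by auto
  then show ?thesis by simp
qed

fun Eb :: "'x list \<Rightarrow> nat \<Rightarrow> nat" where
  "Eb S 0 = 0"
| "Eb S (Suc j) = (if Eb S j < length S then Eb S j + Suc (lstar S (Eb S j)) else Eb S j)"

lemma Eb_le_len: "Eb S j \<le> length S"
  by (induction j) (use lstar_prop(1) in \<open>fastforce+\<close>)

lemma Eb_Suc_mono: "Eb S j \<le> Eb S (Suc j)" by simp

lemma Eb_mono: "j \<le> j' \<Longrightarrow> Eb S j \<le> Eb S j'"
  by (rule lift_Suc_mono_le[of "Eb S"]) auto

lemma Eb_ge: "min j (length S) \<le> Eb S j"
  by (induction j) auto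

lemma Eb_strict: "Eb S j < length S \<Longrightarrow> Eb S j < Eb S (Suc j)" by simp

lemma Eb_local:
  assumes t: "take m S = take m T" and m: "m < length S" "m \<le> length T" and e: "Eb S j \<le> m"
  shows "Eb T j = Eb S j"
  using e
proof (induction j)
  case 0
  then show ?case by simp
next
  case (Suc j)
  have ej: "Eb S j \<le> m" using Suc.prems Eb_Suc_mono[of S j] by linarith
  then have IH: "Eb T j = Eb S j" using Suc.IH by simp
  have uS: "Eb S j < length S" using ej m by simp
  have eS: "Eb S j + Suc (lstar S (Eb S j)) \<le> m" using Suc.prems uS by simp
  have uT: "Eb T j < length T" using IH eS m by simp
  have "lstar T (Eb S j) = lstar S (Eb S j)" by (rule lstar_local[OF uS eS m t])
  then show ?case using IH uS uT by simp
qed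

lemma lzc_Eb: "Eb S j < length S \<Longrightarrow> lz_count_from S 0 = j + lz_count_from S (Eb S j)"
proof (induction j)
  case 0
  then show ?case by simp
next
  case (Suc j)
  have a: "Eb S j < length S" using Suc.prems by (cases "Eb S j < length S") auto
  have "lz_count_from S (Eb S j) = Suc (lz_count_from S (Eb S j + phrase_len S (Eb S j)))"
    using a by (subst lz_count_from.simps) simp
  then show ?case using Suc.IH[OF a] a by (simp add: phrase_len_lstar)
qed

lemma Eb_lt_phrases: "Eb S j < length S \<Longrightarrow> j < lz_phrases S"
proof -
  assume a: "Eb S j < length S"
  have "lz_count_from S (Eb S j) = Suc (lz_count_from S (Eb S j + phrase_len S (Eb S j)))"
    using a by (subst lz_count_from.simps) simp
  then show ?thesis using lzc_Eb[OF a] unfolding lz_phrases_def by simp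
qed

lemma has_src_map: "inj f \<Longrightarrow> has_src (map f S) u l = has_src S u l"
  unfolding has_src_def by (simp add: take_map drop_map inj_map_eq_map)

lemma lstar_map: "inj f \<Longrightarrow> lstar (map f S) u = lstar S u"
  unfolding lstar_def by (simp add: has_src_map)

lemma lzc_map: "inj f \<Longrightarrow> lz_count_from (map f S) u = lz_count_from S u"
proof (induction S u rule: lz_count_from.induct)
  case (1 S u)
  show ?case
    apply (subst (1 2) lz_count_from.simps)
    using 1 by (simp add: phrase_len_lstar lstar_map)
qed

lemma lz_phrases_map: "inj f \<Longrightarrow> lz_phrases (map f S) = lz_phrases S"
  unfolding lz_phrases_def by (rule lzc_map)


lemma lcpr_sym: "lcpr X Y = lcpr Y X"
  by (induction X Y rule: lcpr.induct) auto

definition src :: "'x list \<Rightarrow> nat \<Rightarrow> nat" where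
  "src S u = (SOME s. s + lstar S u \<le> u \<and> take (lstar S u) (drop s S) = take (lstar S u) (drop u S))"

lemma src_prop: assumes "u < length S"
  shows "src S u + lstar S u \<le> u" "take (lstar S u) (drop (src S u) S) = take (lstar S u) (drop u S)"
proof -
  have "\<exists>s. s + lstar S u \<le> u \<and> take (lstar S u) (drop s S) = take (lstar S u) (drop u S)"
    using lstar_prop(2)[OF assms] unfolding has_src_def .
  from someI_ex[OF this] show "src S u + lstar S u \<le> u" "take (lstar S u) (drop (src S u) S) = take (lstar S u) (drop u S)"
    unfolding src_def by auto
qed

definition jst :: "'a list \<Rightarrow> 'a list \<Rightarrow> nat" where
  "jst A B = (GREATEST j. Eb (mkA A) j \<le> lcp A B)"

lemma lcp_mk: "lcpr (mkA A) (mkB B) = lcp A B" by (simp add: lcpr_mk lcp_eq)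

lemma lcp_le: "lcp A B \<le> length A" "lcp A B \<le> length B"
  using lcpr_le[of A B] by (auto simp: lcp_eq)

lemma take_lcp: "take (lcp A B) (mkA A) = take (lcp A B) (mkB B)"
  using lcpr_take_eq[of "mkA A" "mkB B"] by (simp add: lcp_mk)

lemma Eb_B: assumes "Eb (mkA A) j \<le> lcp A B" shows "Eb (mkB B) j = Eb (mkA A) j"
  by (rule Eb_local[OF take_lcp]) (use lcp_le[of A B] assms in auto)

lemma eqw: "take (Eb (mkA A) j) (mkA A) = take (Eb (mkB B) j) (mkB B) \<longleftrightarrow> Eb (mkA A) j \<le> lcp A B"
proof
  assume h: "take (Eb (mkA A) j) (mkA A) = take (Eb (mkB B) j) (mkB B)"
  have "length (take (Eb (mkA A) j) (mkA A)) = Eb (mkA A) j" using Eb_le_len[of "mkA A" j] by simp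
  moreover have "length (take (Eb (mkB B) j) (mkB B)) = Eb (mkB B) j" using Eb_le_len[of "mkB B" j] by simp
  ultimately have e: "Eb (mkB B) j = Eb (mkA A) j" using h by metis
  then have "Eb (mkA A) j \<le> lcpr (mkA A) (mkB B)"
    using lcpr_iff[of "Eb (mkA A) j" "mkA A" "mkB B"] h Eb_le_len[of "mkA A" j] Eb_le_len[of "mkB B" j] by simp
  then show "Eb (mkA A) j \<le> lcp A B" by (simp add: lcp_mk)
next
  assume h: "Eb (mkA A) j \<le> lcp A B"
  have "take (Eb (mkA A) j) (take (lcp A B) (mkA A)) = take (Eb (mkA A) j) (take (lcp A B) (mkB B))"
    using take_lcp by metis
  then show "take (Eb (mkA A) j) (mkA A) = take (Eb (mkB B) j) (mkB B)"
    using h Eb_B[OF h] by (simp add: min_absorb1)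
qed

lemma Eb_le_bound: "Eb (mkA A) j \<le> lcp A B \<Longrightarrow> j \<le> lcp A B"
  using Eb_ge[of j "mkA A"] lcp_le[of A B] by simp

lemma jst_iff: "Eb (mkA A) j \<le> lcp A B \<longleftrightarrow> j \<le> jst A B"
proof -
  have P: "Eb (mkA A) (jst A B) \<le> lcp A B" unfolding jst_def
    by (rule GreatestI_nat[where k=0 and b="lcp A B"]) (auto intro: Eb_le_bound)
  show ?thesis
  proof
    assume "Eb (mkA A) j \<le> lcp A B" then show "j \<le> jst A B" unfolding jst_def
      by (rule Greatest_le_nat[where b="lcp A B"]) (auto intro: Eb_le_bound)
  next
    assume "j \<le> jst A B"
    then show "Eb (mkA A) j \<le> lcp A B" using Eb_mono[of j "jst A B" "mkA A"] P by simp
  qed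
qed

lemma jst_le_lcp: "jst A B \<le> lcp A B"
  using jst_iff[of A "jst A B" B] Eb_le_bound by blast

lemma jst_le_z: "jst A B \<le> lz_phrases (take (lcp A B) A)"
proof (cases "jst A B")
  case 0
  then show ?thesis by simp
next
  case (Suc j)
  let ?A = "mkA A" and ?l = "lcp A B"
  let ?T = "take ?l ?A"
  have lA: "?l < length ?A" using lcp_le[of A B] by simp
  have lT: "length ?T = ?l" using lA by simp
  have e1: "Eb ?A (Suc j) \<le> ?l" using jst_iff[of A "Suc j" B] Suc by simp
  have e0: "Eb ?A j \<le> ?l" using jst_iff[of A j B] Suc by simp
  have "Eb ?A j < Eb ?A (Suc j)" using e0 lA by (intro Eb_strict) simp
  moreover have "Eb ?T j = Eb ?A j" by (rule Eb_local[of ?l]) (use lA e0 in auto)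
  ultimately have "Eb ?T j < length ?T" using e1 lT by simp
  then have "j < lz_phrases ?T" by (rule Eb_lt_phrases)
  moreover have "?T = map Inl (take ?l A)" using lcp_le[of A B] by (simp add: mkA_def take_map)
  moreover have "lz_phrases (map (Inl :: 'a \<Rightarrow> 'a + bool) (take ?l A)) = lz_phrases (take ?l A)"
    by (rule lz_phrases_map) (simp add: inj_def)
  ultimately show ?thesis using Suc by simp
qed

lemma final_formula:
  fixes A B :: "'a list"
  defines "u \<equiv> Eb (mkA A) (jst A B)"
  shows "Eb (mkB B) (jst A B) = u"
    "u + lcpr (drop u (mkB B)) (take (lstar (mkA A) u) (drop (src (mkA A) u) (mkB B))) = lcp A B"
    "src (mkA A) u \<le> lcp A B" "lstar (mkA A) u \<le> lcp A B"
proof -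
  let ?A = "mkA A" and ?B = "mkB B" and ?l = "lcp A B"
  have uL: "u \<le> ?l" unfolding u_def using jst_iff[of A "jst A B" B] by simp
  show "Eb ?B (jst A B) = u" unfolding u_def by (rule Eb_B) (use uL u_def in simp)
  have lA: "?l < length ?A" using lcp_le[of A B] by simp
  have uA: "u < length ?A" using uL lA by simp
  have "\<not> Eb ?A (Suc (jst A B)) \<le> ?l" using jst_iff[of A "Suc (jst A B)" B] by simp
  then have big: "?l < u + Suc (lstar ?A u)" using uA unfolding u_def by simp
  let ?s = "src ?A u" and ?k = "lstar ?A u"
  have s1: "?s + ?k \<le> u" and s2: "take ?k (drop ?s ?A) = take ?k (drop u ?A)" using src_prop[OF uA] by auto
  show "?s \<le> ?l" "?k \<le> ?l" using s1 uL by auto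
  have "take ?k (drop ?s ?B) = take ?k (drop ?s (take ?l ?B))" using s1 uL by (simp add: take_drop_take)
  also have "\<dots> = take ?k (drop ?s (take ?l ?A))" by (simp add: take_lcp)
  also have "\<dots> = take ?k (drop u ?A)" using s1 uL s2 by (simp add: take_drop_take)
  finally have w: "take ?k (drop ?s ?B) = take ?k (drop u ?A)" .
  have "lcpr (drop u ?B) (drop u ?A) = lcpr ?B ?A - u"
    by (rule lcpr_drop) (use uL lcp_mk[of A B] lcpr_sym[of ?A ?B] in simp)
  then have "lcpr (drop u ?B) (drop u ?A) = ?l - u" using lcp_mk[of A B] lcpr_sym[of ?A ?B] by simp
  then have "lcpr (drop u ?B) (take ?k (drop ?s ?B)) = min (?l - u) ?k" unfolding w lcpr_take by simp
  then show "u + lcpr (drop u ?B) (take ?k (drop ?s ?B)) = ?l" using big uL by simp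
qed


definition wstep :: "nat \<Rightarrow> nat \<times> nat \<Rightarrow> bool \<Rightarrow> bool \<Rightarrow> bool \<Rightarrow> nat \<times> nat" where
  "wstep K x r0 r1 r2 = (case x of (c,h) \<Rightarrow>
     if r0 \<and> \<not> r1 then (if h = 0 then (c,0) else (2*c + (if r2 then 1 else 0), h-1))
     else (if K \<le> h then (c,h) else (c div 2, Suc h)))"

definition Dset :: "nat \<Rightarrow> nat \<Rightarrow> nat \<Rightarrow> nat \<Rightarrow> nat set" where
  "Dset K t c h = {g. h \<le> g \<and> g < K \<and> t div 2^g \<noteq> c div 2^(g-h)}"

definition wdist :: "nat \<Rightarrow> nat \<Rightarrow> nat \<times> nat \<Rightarrow> nat" where
  "wdist K t x = (case x of (c,h) \<Rightarrow> h + 2 * card (Dset K t c h))"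

definition wvalid :: "nat \<Rightarrow> nat \<times> nat \<Rightarrow> bool" where
  "wvalid K x = (case x of (c,h) \<Rightarrow> h \<le> K \<and> c < 2^(K-h))"

lemma le_div_iff: "0 < (q::nat) \<Longrightarrow> k \<le> m div q \<longleftrightarrow> k*q \<le> m"
  by (metis div_less_iff_less_mult not_less)

lemma finite_Dset[simp]: "finite (Dset K t c h)"
  unfolding Dset_def by (rule finite_subset[of _ "{..<K}"]) auto

lemma div_pow_split: "h \<le> g \<Longrightarrow> (x::nat) div 2^g = x div 2^h div 2^(g-h)"
  by (metis div_mult2_eq le_add_diff_inverse power_add)

lemma Dset_parent: assumes "h < K" shows "Dset K t (c div 2) (Suc h) = Dset K t c h - {h}"
proof -
  have "\<And>g. Suc h \<le> g \<Longrightarrow> c div 2 div 2^(g - Suc h) = c div 2^(g-h)"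
    using div_pow_split[of 1 "g-h" c for g] by (simp add: Suc_diff_Suc)
  then show ?thesis unfolding Dset_def by (auto simp: Suc_le_eq)
qed

lemma Dset_child: assumes "0 < h" "b \<le> 1"
  shows "Dset K t (2*c+b) (h-1) = Dset K t c h \<union> (if t div 2^(h-1) \<noteq> 2*c+b \<and> h-1 < K then {h-1} else {})"
proof -
  have "\<And>g. h \<le> g \<Longrightarrow> (2*c+b) div 2^(g - (h-1)) = c div 2^(g-h)"
  proof -
    fix g assume g: "h \<le> g"
    have "g - (h-1) = Suc (g-h)" using g assms by simp
    then have "(2*c+b) div 2^(g - (h-1)) = (2*c+b) div 2 div 2^(g-h)"
      by (simp add: div_mult2_eq)
    also have "(2*c+b) div 2 = c" using assms by auto
    finally show "(2*c+b) div 2^(g - (h-1)) = c div 2^(g-h)" .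
  qed
  note X = this
  show ?thesis
  proof (rule set_eqI)
    fix g
    show "g \<in> Dset K t (2*c+b) (h-1) \<longleftrightarrow> g \<in> Dset K t c h \<union> (if t div 2^(h-1) \<noteq> 2*c+b \<and> h-1 < K then {h-1} else {})"
    proof (cases "g = h-1")
      case True
      then show ?thesis using assms unfolding Dset_def by auto
    next
      case False
      then have gg: "h - 1 \<le> g \<longleftrightarrow> h \<le> g" using assms by auto
      show ?thesis
      proof (cases "h \<le> g")
        case True
        then show ?thesis using X[OF True] False gg unfolding Dset_def by simp
      next
        case F2: False
        then show ?thesis using False gg unfolding Dset_def by simp
      qed
    qed
  qed
qed

lemma inside_Dset: assumes "t div 2^h = c" shows "Dset K t c h = {}"
proof -
  have "\<And>g. h \<le> g \<Longrightarrow> t div 2^g = c div 2^(g-h)"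
  proof -
    fix g assume "h \<le> g"
    from div_pow_split[OF this, of t] show "t div 2^g = c div 2^(g-h)" using assms by simp
  qed
  then show ?thesis unfolding Dset_def by blast
qed

lemma Dset_root: "t < 2^K \<Longrightarrow> c < 2^(K-h) \<Longrightarrow> h \<le> K \<Longrightarrow> K \<notin> Dset K t c h"
  unfolding Dset_def by auto

lemma wstep_valid: "wvalid K x \<Longrightarrow> wvalid K (wstep K x r0 r1 r2)"
proof (cases x)
  case (Pair c h)
  assume v: "wvalid K x"
  then have h: "h \<le> K" "c < 2^(K-h)" using Pair by (auto simp: wvalid_def)
  show ?thesis
  proof (cases "r0 \<and> \<not> r1")
    case True
    show ?thesis
    proof (cases "h = 0")
      case False
      have "K - (h-1) = Suc (K-h)" using False h by simp
      then have "2*c + (if r2 then 1 else 0) < 2^(K-(h-1))" using h by auto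
      then show ?thesis using Pair True False h by (simp add: wstep_def wvalid_def)
    qed (use Pair True h in \<open>simp add: wstep_def wvalid_def\<close>)
  next
    case False
    show ?thesis
    proof (cases "K \<le> h")
      case F2: False
      have "K - h = Suc (K - Suc h)" using F2 by simp
      then have "c div 2 < 2^(K - Suc h)" using h by auto
      then show ?thesis using Pair False F2 by (auto simp: wstep_def wvalid_def)
    qed (use Pair False h in \<open>auto simp: wstep_def wvalid_def\<close>)
  qed
qed

lemma wstep_dist_le: "wvalid K x \<Longrightarrow> wdist K t (wstep K x r0 r1 r2) \<le> wdist K t x + 1"
proof (cases x)
  case (Pair c h)
  assume v: "wvalid K x"
  then have h: "h \<le> K" "c < 2^(K-h)" using Pair by (auto simp: wvalid_def)
  show ?thesis
  proof (cases "r0 \<and> \<not> r1")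
    case True
    show ?thesis
    proof (cases "h = 0")
      case False
      let ?b = "if r2 then 1 else 0 :: nat"
      have "card (Dset K t (2*c+?b) (h-1)) \<le> card (Dset K t c h) + 1"
        using Dset_child[of h ?b K t c] False by (auto intro: card_insert_le_m1 simp: card_insert_if)
      then show ?thesis using Pair True False by (simp add: wstep_def wdist_def)
    qed (use Pair True in \<open>simp add: wstep_def wdist_def\<close>)
  next
    case False
    show ?thesis
    proof (cases "K \<le> h")
      case F2: False
      have "card (Dset K t (c div 2) (Suc h)) \<le> card (Dset K t c h)"
        using Dset_parent[of h K t c] F2 by (simp add: card_Diff1_le)
      then show ?thesis using Pair False F2 by (auto simp: wstep_def wdist_def)
    qed (use Pair False in \<open>auto simp: wstep_def wdist_def\<close>)
  qed
qed

lemma wstep_good: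
  assumes v: "wvalid K (c,h)" and t: "t < 2^K"
    and r0: "r0 = (c*2^h \<le> t)" and r1: "r1 = ((c+1)*2^h \<le> t)" and r2: "r2 = ((2*c+1)*2^(h-1) \<le> t)"
  shows "wdist K t (wstep K (c,h) r0 r1 r2) = wdist K t (c,h) - 1"
    "wdist K t (c,h) = 0 \<Longrightarrow> wstep K (c,h) r0 r1 r2 = (c,h)"
proof -
  have h: "h \<le> K" "c < 2^(K-h)" using v by (auto simp: wvalid_def)
  have "(wdist K t (wstep K (c,h) r0 r1 r2) = wdist K t (c,h) - 1) \<and>
        (wdist K t (c,h) = 0 \<longrightarrow> wstep K (c,h) r0 r1 r2 = (c,h))"
  proof (cases "t div 2^h = c")
    case True
    have lo: "c*2^h \<le> t" and hi: "t < (c+1)*2^h" using True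
      by (metis div_times_less_eq_dividend mult.commute) (metis True dividend_less_div_times mult.commute mult_Suc zero_less_numeral zero_less_power add.commute plus_1_eq_Suc)
    have D0: "Dset K t c h = {}" by (rule inside_Dset[OF True])
    show ?thesis
    proof (cases "h = 0")
      case True
      then show ?thesis using lo hi r0 r1 D0 by (simp add: wstep_def wdist_def)
    next
      case False
      let ?b = "if r2 then 1 else 0 :: nat"
      have tt: "t div 2^(h-1) div 2 = c"
        using True div_pow_split[of "h-1" h t] False by simp
      have "t div 2^(h-1) = 2*c + ?b"
      proof -
        have e: "2^h = 2 * (2::nat)^(h-1)" using False by (metis power_Suc Suc_pred' not_gr_zero)
        have "t div 2^(h-1) = 2*c \<or> t div 2^(h-1) = 2*c+1" using tt by auto
        moreover have "r2 \<longleftrightarrow> t div 2^(h-1) \<ge> 2*c+1"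
          unfolding r2 by (simp add: le_div_iff)
        ultimately show ?thesis by auto
      qed
      then have "Dset K t (2*c+?b) (h-1) = {}" using inside_Dset by blast
      then show ?thesis using lo hi r0 r1 D0 False by (simp add: wstep_def wdist_def)
    qed
  next
    case False
    have hK: "h < K" using False h by (metis le_neq_implies_less less_one diff_self_eq_0 power_0 t div_less less_nat_zero_code)
    have hin: "h \<in> Dset K t c h" using False hK unfolding Dset_def by simp
    have out: "\<not> (c*2^h \<le> t \<and> \<not> (c+1)*2^h \<le> t)"
    proof
      assume a: "c*2^h \<le> t \<and> \<not> (c+1)*2^h \<le> t"
      then have "c \<le> t div 2^h" by (simp add: le_div_iff)
      moreover have "t div 2^h < c+1" using a by (simp add: div_less_iff_less_mult)
      ultimately show False using False by simp
    qed
    have "card (Dset K t (c div 2) (Suc h)) = card (Dset K t c h) - 1"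
      using Dset_parent[OF hK, of t c] hin by simp
    moreover have "card (Dset K t c h) \<ge> 1" using hin by (metis One_nat_def Suc_leI card_gt_0_iff emptyE finite_Dset)
    moreover have nr: "\<not> (r0 \<and> \<not> r1)" using out r0 r1 by simp
    moreover have "wstep K (c,h) r0 r1 r2 = (c div 2, Suc h)" using nr hK by (auto simp: wstep_def)
    ultimately have "wdist K t (wstep K (c,h) r0 r1 r2) = Suc h + 2 * (card (Dset K t c h) - 1)"
      by (simp add: wdist_def)
    moreover have "wdist K t (c,h) = h + 2 * card (Dset K t c h)" by (simp add: wdist_def)
    moreover have "card (Dset K t c h) \<ge> 1" using hin by (metis One_nat_def Suc_leI card_gt_0_iff emptyE finite_Dset)
    ultimately have A1: "wdist K t (wstep K (c,h) r0 r1 r2) = wdist K t (c,h) - 1" by linarith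
    have A2: "wdist K t (c,h) \<noteq> 0" using hin by (auto simp: wdist_def)
    show ?thesis using A1 A2 by blast
  qed
  then show "wdist K t (wstep K (c,h) r0 r1 r2) = wdist K t (c,h) - 1"
    "wdist K t (c,h) = 0 \<Longrightarrow> wstep K (c,h) r0 r1 r2 = (c,h)" by auto
qed

lemma wdist0: "wdist K t (c,h) = 0 \<Longrightarrow> t < 2^K \<Longrightarrow> wvalid K (c,h) \<Longrightarrow> c = t \<and> h = 0"
proof -
  assume d: "wdist K t (c,h) = 0" and t: "t < 2^K" and v: "wvalid K (c,h)"
  have h0: "h = 0" and D: "Dset K t c h = {}" using d by (auto simp: wdist_def)
  show ?thesis
  proof (cases "K = 0")
    case True
    then show ?thesis using t v h0 by (simp add: wvalid_def)
  next
    case False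
    then have "0 \<notin> Dset K t c 0" using D h0 by simp
    then show ?thesis using False h0 unfolding Dset_def by simp
  qed
qed

lemma wdist_root: "t < 2^K \<Longrightarrow> wdist K t (0,K) = K"
proof -
  have "Dset K t 0 K = {}" unfolding Dset_def by auto
  then show ?thesis unfolding wdist_def by simp
qed


definition blk :: "nat \<Rightarrow> bool list \<Rightarrow> nat \<Rightarrow> bool list" where
  "blk Bs xs i = take Bs (drop (i*Bs) xs)"

fun wst :: "nat \<Rightarrow> nat \<Rightarrow> nat \<Rightarrow> (nat \<Rightarrow> nat \<Rightarrow> bool list \<Rightarrow> bool) \<Rightarrow> nat \<Rightarrow> bool list \<Rightarrow> nat \<times> nat" where
  "wst K off Bs res 0 xs = (0,K)"
| "wst K off Bs res (Suc i) xs = (case wst K off Bs res i xs of (c,h) \<Rightarrow>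
     wstep K (c,h) (res 0 (c*2^h) (blk Bs xs (off+i))) (res 1 ((c+1)*2^h) (blk Bs xs (off+i)))
        (res 2 ((2*c+1)*2^(h-1)) (blk Bs xs (off+i))))"

lemma blk_append: "(Suc j)*Bs \<le> length ys \<Longrightarrow> blk Bs (ys@zs) j = blk Bs ys j"
  unfolding blk_def by (simp add: add.commute)

lemma blk_last: "length ys = j*Bs \<Longrightarrow> length zs = Bs \<Longrightarrow> blk Bs (ys@zs) j = zs"
  unfolding blk_def by simp

lemma wst_prefix: "(off + i)*Bs \<le> length ys \<Longrightarrow> wst K off Bs res i (ys@zs) = wst K off Bs res i ys"
proof (induction i)
  case (Suc i)
  have "(off+i)*Bs \<le> length ys" using Suc.prems by (meson add_le_mono le_refl le_trans mult_le_mono1 le_add1 add_Suc_right Suc_n_not_le_n nat_le_linear)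
  then have IH: "wst K off Bs res i (ys@zs) = wst K off Bs res i ys" using Suc.IH by simp
  have "blk Bs (ys@zs) (off+i) = blk Bs ys (off+i)" by (rule blk_append) (use Suc.prems in simp)
  then show ?case using IH by simp
qed simp

lemma wst_valid: "wvalid K (wst K off Bs res i xs)"
proof (induction i)
  case 0
  then show ?case by (simp add: wvalid_def)
next
  case (Suc i)
  then show ?case by (auto split: prod.splits intro: wstep_valid)
qed

definition psi :: "nat \<Rightarrow> nat \<Rightarrow> nat \<times> nat \<Rightarrow> real" where
  "psi K t x = 2 ^ wdist K t x - 1"

lemma step_avg:
  fixes eps :: real and res :: "nat \<Rightarrow> nat \<Rightarrow> bool list \<Rightarrow> bool"
  assumes t: "t < 2^K" and v: "wvalid K (c,h)"
    and err: "\<And>i p. i < 3 \<Longrightarrow> Pr Bs (\<lambda>z. res i p z \<noteq> (p \<le> t)) \<le> eps"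
    and e1: "eps \<le> 1/9"
  shows "Av Bs (\<lambda>z. psi K t (wstep K (c,h) (res 0 (c*2^h) z) (res 1 ((c+1)*2^h) z) (res 2 ((2*c+1)*2^(h-1)) z)))
     \<le> ((1 + 9*eps)/2) * psi K t (c,h) + 3*eps"
proof -
  let ?p0 = "c*2^h" and ?p1 = "(c+1)*2^h" and ?p2 = "(2*c+1)*2^(h-1)"
  define bad where "bad z = (res 0 ?p0 z \<noteq> (?p0 \<le> t) \<or> res 1 ?p1 z \<noteq> (?p1 \<le> t) \<or> res 2 ?p2 z \<noteq> (?p2 \<le> t))" for z
  define nx where "nx z = wstep K (c,h) (res 0 ?p0 z) (res 1 ?p1 z) (res 2 ?p2 z)" for z
  define d where "d = wdist K t (c,h)"
  have pb: "Pr Bs bad \<le> 3*eps"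
  proof -
    have "Pr Bs bad \<le> Pr Bs (\<lambda>z. res 0 ?p0 z \<noteq> (?p0 \<le> t)) + Pr Bs (\<lambda>z. res 1 ?p1 z \<noteq> (?p1 \<le> t) \<or> res 2 ?p2 z \<noteq> (?p2 \<le> t))"
      unfolding bad_def by (rule Pr_union)
    also have "\<dots> \<le> Pr Bs (\<lambda>z. res 0 ?p0 z \<noteq> (?p0 \<le> t)) + (Pr Bs (\<lambda>z. res 1 ?p1 z \<noteq> (?p1 \<le> t)) + Pr Bs (\<lambda>z. res 2 ?p2 z \<noteq> (?p2 \<le> t)))"
      by (intro add_left_mono Pr_union)
    also have "\<dots> \<le> eps + (eps + eps)" by (intro add_mono err) auto
    finally show ?thesis by simp
  qed
  have good: "\<not> bad z \<Longrightarrow> wdist K t (nx z) = d - 1 \<and> (d = 0 \<longrightarrow> nx z = (c,h))" for z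
    using wstep_good[OF v t, of "res 0 ?p0 z" "res 1 ?p1 z" "res 2 ?p2 z"] unfolding bad_def nx_def d_def by auto
  have le1: "wdist K t (nx z) \<le> d + 1" for z unfolding nx_def d_def by (rule wstep_dist_le[OF v])
  show ?thesis
  proof (cases "d = 0")
    case True
    have "psi K t (nx z) \<le> (if bad z then 1 else 0)" for z
    proof (cases "bad z")
      case True
      then have "wdist K t (nx z) \<le> 1" using le1[of z] \<open>d = 0\<close> by simp
      then have "(2::real) ^ wdist K t (nx z) \<le> 2^1" by (intro power_increasing) auto
      then show ?thesis using True by (simp add: psi_def)
    next
      case False
      then show ?thesis using good[OF False] \<open>d=0\<close> by (simp add: psi_def d_def)
    qed
    then have "Av Bs (\<lambda>z. psi K t (nx z)) \<le> Pr Bs bad" unfolding Pr_Ex by (rule Av_mono)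
    moreover have "psi K t (c,h) = 0" using True by (simp add: psi_def d_def)
    ultimately show ?thesis using pb unfolding nx_def by simp
  next
    case False
    have "psi K t (nx z) \<le> (2^(d-1) - 1) + 3 * 2^(d-1) * (if bad z then 1 else 0)" for z
    proof (cases "bad z")
      case True
      have "(2::real) ^ wdist K t (nx z) \<le> 2^(d+1)" by (intro power_increasing le1) auto
      also have "(2::real)^(d+1) = 4 * 2^(d-1)"
      proof -
        have e: "d + 1 = Suc (Suc (d-1))" using False by simp
        show ?thesis unfolding e by simp
      qed
      finally show ?thesis using True by (simp add: psi_def)
    next
      case F2: False
      then show ?thesis using good[OF F2] by (simp add: psi_def)
    qed
    then have "Av Bs (\<lambda>z. psi K t (nx z)) \<le> Av Bs (\<lambda>z. (2^(d-1) - 1) + 3 * 2^(d-1) * (if bad z then 1 else 0))"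
      by (rule Av_mono)
    also have "\<dots> = (2^(d-1) - 1) + 3 * 2^(d-1) * Pr Bs bad"
      unfolding Av_add Av_cmult Pr_Ex by simp
    also have "\<dots> \<le> (2^(d-1) - 1) + 3 * 2^(d-1) * (3*eps)"
      by (intro add_left_mono mult_left_mono pb) auto
    also have "\<dots> = ((1 + 9*eps)/2) * 2^d - 1"
    proof -
      have "d = Suc (d-1)" using False by simp
      then have "(2::real)^d = 2 * 2^(d-1)" by (metis power_Suc)
      then show ?thesis by (simp add: field_simps)
    qed
    also have "\<dots> \<le> ((1 + 9*eps)/2) * (2^d - 1) + 3*eps"
    proof -
      have "0 \<le> eps" using err[of 0 0] Pr_ge0[of Bs "\<lambda>z. res 0 0 z \<noteq> (0 \<le> t)"] by linarith
      then show ?thesis using e1 by (simp add: field_simps)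
    qed
    finally show ?thesis unfolding nx_def psi_def d_def .
  qed
qed


lemma walk_step:
  fixes eps :: real and res :: "nat \<Rightarrow> nat \<Rightarrow> bool list \<Rightarrow> bool"
  assumes t: "t < 2^K"
    and err: "\<And>i p. i < 3 \<Longrightarrow> Pr Bs (\<lambda>z. res i p z \<noteq> (p \<le> t)) \<le> eps"
    and e1: "eps \<le> 1/9"
  shows "Av ((off + Suc i)*Bs) (\<lambda>ys. psi K t (wst K off Bs res (Suc i) ys))
     \<le> ((1 + 9*eps)/2) * Av ((off + i)*Bs) (\<lambda>ys. psi K t (wst K off Bs res i ys)) + 3*eps"
proof -
  let ?mu = "(1 + 9*eps)/2"
  have sp: "(off + Suc i)*Bs = (off+i)*Bs + Bs" by simp
  have "Av ((off + Suc i)*Bs) (\<lambda>ys. psi K t (wst K off Bs res (Suc i) ys))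
     = Av ((off+i)*Bs) (\<lambda>ys. Av Bs (\<lambda>zs. psi K t (wst K off Bs res (Suc i) (ys@zs))))"
    unfolding sp Av_split ..
  also have "\<dots> \<le> Av ((off+i)*Bs) (\<lambda>ys. ?mu * psi K t (wst K off Bs res i ys) + 3*eps)"
  proof (rule Av_mono)
    fix ys :: "bool list" assume ly: "length ys = (off+i)*Bs"
    obtain c h where ch: "wst K off Bs res i ys = (c,h)" by fastforce
    have v: "wvalid K (c,h)" using wst_valid[of K off Bs res i ys] ch by simp
    have "Av Bs (\<lambda>zs. psi K t (wst K off Bs res (Suc i) (ys@zs)))
       = Av Bs (\<lambda>z. psi K t (wstep K (c,h) (res 0 (c*2^h) z) (res 1 ((c+1)*2^h) z) (res 2 ((2*c+1)*2^(h-1)) z)))"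
    proof (rule Av_cong)
      fix zs :: "bool list" assume lz: "length zs = Bs"
      have "wst K off Bs res i (ys@zs) = (c,h)" using wst_prefix[of off i Bs ys K res zs] ly ch by simp
      moreover have "blk Bs (ys@zs) (off+i) = zs" using blk_last[of ys "off+i" Bs zs] ly lz by simp
      ultimately show "psi K t (wst K off Bs res (Suc i) (ys@zs)) =
        psi K t (wstep K (c,h) (res 0 (c*2^h) zs) (res 1 ((c+1)*2^h) zs) (res 2 ((2*c+1)*2^(h-1)) zs))"
        by simp
    qed
    also have "\<dots> \<le> ?mu * psi K t (c,h) + 3*eps" by (rule step_avg[OF t v err e1]) auto
    finally show "Av Bs (\<lambda>zs. psi K t (wst K off Bs res (Suc i) (ys@zs))) \<le> ?mu * psi K t (wst K off Bs res i ys) + 3*eps"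
      using ch by simp
  qed
  also have "\<dots> = ?mu * Av ((off + i)*Bs) (\<lambda>ys. psi K t (wst K off Bs res i ys)) + 3*eps"
    by (simp only: Av_add Av_cmult Av_const)
  finally show ?thesis .
qed

lemma walk_iter:
  fixes eps :: real and res :: "nat \<Rightarrow> nat \<Rightarrow> bool list \<Rightarrow> bool"
  assumes t: "t < 2^K"
    and err: "\<And>i p. i < 3 \<Longrightarrow> Pr Bs (\<lambda>z. res i p z \<noteq> (p \<le> t)) \<le> eps"
    and e1: "eps < 1/9" and e0: "0 \<le> eps"
  shows "Av ((off + i)*Bs) (\<lambda>ys. psi K t (wst K off Bs res i ys))
     \<le> ((1 + 9*eps)/2)^i * (2^K - 1) + 3*eps / (1 - (1 + 9*eps)/2)"
proof (induction i)
  case 0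
  have "psi K t (0,K) = 2^K - 1" using wdist_root[OF t] by (simp add: psi_def)
  moreover have "0 \<le> 3*eps / (1 - (1 + 9*eps)/2)" using e0 e1 by (intro divide_nonneg_pos) auto
  ultimately show ?case by simp
next
  case (Suc i)
  let ?mu = "(1 + 9*eps)/2"
  let ?F = "\<lambda>i. Av ((off + i)*Bs) (\<lambda>ys. psi K t (wst K off Bs res i ys))"
  have mu0: "0 \<le> ?mu" "?mu < 1" using e0 e1 by auto
  have "?F (Suc i) \<le> ?mu * ?F i + 3*eps" by (rule walk_step[OF t err less_imp_le[OF e1]])
  also have "\<dots> \<le> ?mu * (?mu^i * (2^K - 1) + 3*eps / (1 - ?mu)) + 3*eps"
    by (intro add_right_mono mult_left_mono Suc.IH mu0)
  also have "\<dots> = ?mu^(Suc i) * (2^K - 1) + 3*eps / (1 - ?mu)"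
    using mu0 by (simp add: field_simps)
  finally show ?case .
qed

lemma walk_fail:
  fixes res :: "nat \<Rightarrow> nat \<Rightarrow> bool list \<Rightarrow> bool"
  assumes t: "t < 2^K"
    and err: "\<And>i p. i < 3 \<Longrightarrow> Pr Bs (\<lambda>z. res i p z \<noteq> (p \<le> t)) \<le> 1/256"
    and M: "(off + (2*K+6))*Bs \<le> M"
  shows "Pr M (\<lambda>xs. wst K off Bs res (2*K+6) xs \<noteq> (t,0)) \<le> 1/10"
proof -
  let ?T = "2*K+6"
  let ?m = "(off + ?T)*Bs"
  let ?mu = "(1 + 9*(1/256))/2 :: real"
  have "Pr M (\<lambda>xs. wst K off Bs res ?T xs \<noteq> (t,0)) = Pr (?m + (M - ?m)) (\<lambda>xs. wst K off Bs res ?T xs \<noteq> (t,0))"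
    using M by simp
  also have "\<dots> = Av ?m (\<lambda>ys. if wst K off Bs res ?T ys \<noteq> (t,0) then 1 else 0)"
    unfolding Pr_Ex by (rule Av_prefix) (simp add: wst_prefix)
  also have "\<dots> \<le> Av ?m (\<lambda>ys. psi K t (wst K off Bs res ?T ys))"
  proof (rule Av_mono)
    fix ys :: "bool list"
    obtain c h where ch: "wst K off Bs res ?T ys = (c,h)" by fastforce
    have v: "wvalid K (c,h)" using wst_valid[of K off Bs res ?T ys] ch by simp
    have "(if (c,h) \<noteq> (t,0) then 1 else 0) \<le> psi K t (c,h)"
    proof (cases "(c,h) = (t,0)")
      case False
      then have "wdist K t (c,h) \<noteq> 0" using wdist0[OF _ t v] by auto
      then have "(2::real)^1 \<le> 2^wdist K t (c,h)" by (intro power_increasing) auto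
      then show ?thesis using False by (simp add: psi_def)
    qed (simp add: psi_def)
    then show "(if wst K off Bs res ?T ys \<noteq> (t,0) then 1 else 0) \<le> psi K t (wst K off Bs res ?T ys)"
      using ch by simp
  qed
  also have "\<dots> \<le> ?mu^?T * (2^K - 1) + 3*(1/256) / (1 - ?mu)"
    by (rule walk_iter[OF t err]) auto
  also have "\<dots> \<le> 1/10"
  proof -
    have "?mu^?T * (2^K - 1) \<le> ?mu^?T * 2^K" by simp
    also have "\<dots> = ?mu^6 * (2 * ?mu^2)^K" by (simp add: power_add power_mult power_mult_distrib)
    also have "\<dots> \<le> ?mu^6 * 1" by (intro mult_left_mono power_le_one) (auto simp: power2_eq_square)
    finally have "?mu^?T * (2^K - 1) \<le> ?mu^6" by simp
    moreover have "?mu^6 \<le> 1/20" by (simp add: power_divide)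
    moreover have "3*(1/256) / (1 - ?mu) \<le> (1/20::real)" by simp
    ultimately show ?thesis by linarith
  qed
  finally show ?thesis .
qed

definition hsh :: "nat \<Rightarrow> nat \<Rightarrow> ('w \<Rightarrow> nat) \<Rightarrow> nat \<Rightarrow> bool list \<Rightarrow> 'w \<Rightarrow> bool list" where
  "hsh W b enc i z w = map (\<lambda>k. z ! (i*W*b + enc w * b + k)) [0..<b]"

lemma length_hsh[simp]: "length (hsh W b enc i z w) = b"
  unfolding hsh_def by simp

lemma hsh_collision:
  assumes "enc w \<noteq> enc w'" "enc w < W" "enc w' < W" "i < 3"
  shows "Pr (3*W*b) (\<lambda>z. hsh W b enc i z w = hsh W b enc i z w') = 1/2^b"
proof -
  let ?p = "\<lambda>k. i*W*b + enc w * b + k" and ?q = "\<lambda>k. i*W*b + enc w' * b + k"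
  have eq: "(hsh W b enc i z w = hsh W b enc i z w') \<longleftrightarrow> (\<forall>k<b. z ! ?p k = z ! ?q k)" for z
    unfolding hsh_def by (simp add: list_eq_iff_nth_eq)
  have bnd: "i*W*b + e * b + k < 3*W*b" if "e < W" "k < b" for e k
  proof -
    have "e * b + k < (e+1) * b" using that by simp
    also have "(e+1)*b \<le> W * b" using that by (intro mult_le_mono1) simp
    finally have a: "e * b + k < W * b" .
    have "(i+1)*(W*b) \<le> 3*(W*b)" using assms(4) by (intro mult_le_mono1) simp
    then have "i*W*b + W*b \<le> 3*W*b" by (simp add: algebra_simps)
    then show ?thesis using a by linarith
  qed
  have neq: "enc w * b + k \<noteq> enc w' * b + k'" if "k < b" "k' < b" for k k'
  proof
    assume "enc w * b + k = enc w' * b + k'"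
    then have "(enc w * b + k) div b = (enc w' * b + k') div b" by simp
    then have "enc w = enc w'" using that by simp
    then show False using assms(1) by simp
  qed
  have "Pr (3*W*b) (\<lambda>z. \<forall>k<b. z ! ?p k = z ! ?q k) = 1/2^b"
    by (rule Pr_match) (auto simp: inj_on_def neq bnd assms)
  then show ?thesis unfolding eq .
qed


fun bin :: "nat \<Rightarrow> bool list" where
  "bin n = (if n = 0 then [] else odd n # bin (n div 2))"

fun unbin :: "bool list \<Rightarrow> nat" where
  "unbin [] = 0"
| "unbin (b # bs) = (if b then 1 else 0) + 2 * unbin bs"

declare bin.simps[simp del]

lemma unbin_bin[simp]: "unbin (bin n) = n"
proof (induction n rule: bin.induct)
  case (1 n)
  then show ?case by (subst bin.simps) auto
qed

lemma bin_len: "0 < n \<Longrightarrow> 2 ^ length (bin n) \<le> 2 * n"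
proof (induction n rule: bin.induct)
  case (1 n)
  show ?case
  proof (cases "n div 2 = 0")
    case True
    then have "n = 1" using 1(2) by auto
    then show ?thesis by (simp add: bin.simps)
  next
    case False
    then have "2 ^ length (bin (n div 2)) \<le> 2 * (n div 2)" using 1 by simp
    moreover have "length (bin n) = Suc (length (bin (n div 2)))" using 1(2) by (subst bin.simps) simp
    ultimately show ?thesis by simp
  qed
qed

lemma bin_len_log: "real (length (bin n)) \<le> 1 + log 2 (real n + 1)"
proof (cases "n = 0")
  case True
  then show ?thesis by (simp add: bin.simps)
next
  case False
  have "2 ^ length (bin n) \<le> 2 * n" using bin_len False by simp
  then have "real (length (bin n)) \<le> log 2 (real (2*n))" using le_log2_of_power by blast
  also have "\<dots> = 1 + log 2 (real n)" using False by (simp add: log_mult)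
  also have "\<dots> \<le> 1 + log 2 (real n + 1)" using False by simp
  finally show ?thesis .
qed

datatype pst = PEx nat | PWk nat nat nat nat | PF1 nat | PF2 nat nat | PDn nat

definition wd :: "'x list \<Rightarrow> nat \<Rightarrow> 'x list" where "wd S p = take (Eb S p) S"

definition amsg :: "nat \<Rightarrow> 'a::finite list \<Rightarrow> bool list \<Rightarrow> pst \<Rightarrow> bool list" where
  "amsg W A xs st = (let S = mkA A; Bs = 3*W*8 in case st of
     PEx k \<Rightarrow> hsh W 8 to_nat 0 (blk Bs xs k) (wd S (2^k - 1))
   | PWk K i c h \<Rightarrow> hsh W 8 to_nat 0 (blk Bs xs (K+1+i)) (wd S (c*2^h))
        @ hsh W 8 to_nat 1 (blk Bs xs (K+1+i)) (wd S ((c+1)*2^h))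
        @ hsh W 8 to_nat 2 (blk Bs xs (K+1+i)) (wd S ((2*c+1)*2^(h-1)))
   | PF1 j \<Rightarrow> bin (src S (Eb S j))
   | PF2 j s \<Rightarrow> bin (lstar S (Eb S j))
   | PDn x \<Rightarrow> [])"

definition bmsg :: "nat \<Rightarrow> 'a::finite list \<Rightarrow> bool list \<Rightarrow> pst \<Rightarrow> bool list \<Rightarrow> bool list" where
  "bmsg W B xs st am = (let S = mkB B; Bs = 3*W*8 in case st of
     PEx k \<Rightarrow> [am = hsh W 8 to_nat 0 (blk Bs xs k) (wd S (2^k - 1))]
   | PWk K i c h \<Rightarrow> [take 8 am = hsh W 8 to_nat 0 (blk Bs xs (K+1+i)) (wd S (c*2^h)),
        take 8 (drop 8 am) = hsh W 8 to_nat 1 (blk Bs xs (K+1+i)) (wd S ((c+1)*2^h)),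
        drop 16 am = hsh W 8 to_nat 2 (blk Bs xs (K+1+i)) (wd S ((2*c+1)*2^(h-1)))]
   | PF1 j \<Rightarrow> []
   | PF2 j s \<Rightarrow> bin (Eb S j + lcpr (drop (Eb S j) S) (take (unbin am) (drop s S)))
   | PDn x \<Rightarrow> [])"

definition upd :: "pst \<Rightarrow> bool list \<Rightarrow> bool list \<Rightarrow> pst" where
  "upd st am bm = (case st of
     PEx k \<Rightarrow> (if bm = [True] then PEx (Suc k) else PWk k 0 0 k)
   | PWk K i c h \<Rightarrow> (case wstep K (c,h) (bm!0) (bm!1) (bm!2) of (c',h') \<Rightarrow>
        if Suc i = 2*K+6 then PF1 c' else PWk K (Suc i) c' h')
   | PF1 j \<Rightarrow> PF2 j (unbin am)
   | PF2 j s \<Rightarrow> PDn (unbin bm)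
   | PDn x \<Rightarrow> PDn x)"

fun psf :: "pst \<Rightarrow> bool list list \<Rightarrow> pst" where
  "psf s (a # b # t) = psf (upd s a b) t"
| "psf s _ = s"

definition isDn :: "pst \<Rightarrow> bool" where "isDn s = (case s of PDn _ \<Rightarrow> True | _ \<Rightarrow> False)"
definition outv :: "pst \<Rightarrow> nat" where "outv s = (case s of PDn x \<Rightarrow> x | _ \<Rightarrow> 0)"

definition proto :: "nat \<Rightarrow> nat \<Rightarrow> 'a::finite protocol" where
  "proto W M = \<lparr> turn = (\<lambda>r t. if even (length t) then (if isDn (psf (PEx 0) t) then None else Some True) else Some False),
     alice_msg = (\<lambda>A r t. amsg W A (map r [0..<M]) (psf (PEx 0) t)),
     bob_msg = (\<lambda>B r t. bmsg W B (map r [0..<M]) (psf (PEx 0) t) (last t)),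
     outp = (\<lambda>r t. outv (psf (PEx 0) t)) \<rparr>"

lemma psf_snoc2: "even (length t) \<Longrightarrow> psf s (t @ [a, b]) = upd (psf s t) a b"
  by (induction s t rule: psf.induct) auto

lemma psf_snoc1: "even (length t) \<Longrightarrow> psf s (t @ [a]) = psf s t"
  by (induction s t rule: psf.induct) auto

fun sq :: "nat \<Rightarrow> 'a::finite list \<Rightarrow> 'a list \<Rightarrow> bool list \<Rightarrow> nat \<Rightarrow> pst" where
  "sq W A B xs 0 = PEx 0"
| "sq W A B xs (Suc k) = (let s = sq W A B xs k; a = amsg W A xs s in upd s a (bmsg W B xs s a))"

fun trc :: "nat \<Rightarrow> 'a::finite list \<Rightarrow> 'a list \<Rightarrow> bool list \<Rightarrow> nat \<Rightarrow> bool list list" where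
  "trc W A B xs 0 = []"
| "trc W A B xs (Suc k) = (let s = sq W A B xs k; a = amsg W A xs s in trc W A B xs k @ [a, bmsg W B xs s a])"

lemma length_trc: "length (trc W A B xs k) = 2*k"
  by (induction k) (auto simp: Let_def)

lemma psf_trc: "psf (PEx 0) (trc W A B xs k) = sq W A B xs k"
  by (induction k) (auto simp: Let_def psf_snoc2 length_trc)

lemma transcript_trc:
  assumes "\<forall>i<k. \<not> isDn (sq W A B (map r [0..<M]) i)"
  shows "transcript (proto W M) A B r (2*k) = trc W A B (map r [0..<M]) k"
  using assms
proof (induction k)
  case 0
  then show ?case by simp
next
  case (Suc k)
  let ?xs = "map r [0..<M]"
  have IH: "transcript (proto W M) A B r (2*k) = trc W A B ?xs k" using Suc by simp
  have nd: "\<not> isDn (sq W A B ?xs k)" using Suc.prems by simp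
  let ?a = "amsg W A ?xs (sq W A B ?xs k)"
  have t1: "transcript (proto W M) A B r (Suc (2*k)) = trc W A B ?xs k @ [?a]"
    using IH nd by (simp add: proto_def length_trc psf_trc)
  have "transcript (proto W M) A B r (Suc (Suc (2*k))) = trc W A B ?xs k @ [?a] @ [bmsg W B ?xs (sq W A B ?xs k) ?a]"
    using t1 by (simp add: proto_def length_trc psf_snoc1 psf_trc)
  then show ?case by (simp add: Let_def)
qed

lemma good_run_trc:
  assumes "\<forall>i<k. \<not> isDn (sq W A B (map r [0..<M]) i)" "sq W A B (map r [0..<M]) k = PDn ans"
    "real (2*k) \<le> R" "real (sum_list (map length (trc W A B (map r [0..<M]) k))) \<le> Bits"
  shows "good_run (proto W M) A B ans R Bits r"
  unfolding good_run_def
proof (rule exI[of _ "2*k"])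
  show "let t = transcript (proto W M) A B r (2*k) in turn (proto W M) r t = None \<and> outp (proto W M) r t = ans \<and>
      real (length t) \<le> R \<and> real (sum_list (map length t)) \<le> Bits"
    using assms transcript_trc[OF assms(1)] by (simp add: proto_def length_trc psf_trc isDn_def outv_def)
qed

lemma bits_trc_Suc: "sum_list (map length (trc W A B xs (Suc k))) = sum_list (map length (trc W A B xs k))
   + length (amsg W A xs (sq W A B xs k)) + length (bmsg W B xs (sq W A B xs k) (amsg W A xs (sq W A B xs k)))"
  by (simp add: Let_def)


definition Wn :: "'a::finite itself \<Rightarrow> nat \<Rightarrow> nat" where
  "Wn _ n = Suc (Max (to_nat ` {w :: ('a + bool) list. length w \<le> Suc n}))"

lemma Wn_bound: "length (w :: ('a::finite + bool) list) \<le> Suc n \<Longrightarrow> to_nat w < Wn TYPE('a) n"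
proof -
  assume a: "length w \<le> Suc n"
  have "finite {w :: ('a + bool) list. length w \<le> Suc n}"
    using finite_lists_length_le[of "UNIV :: ('a + bool) set" "Suc n"] by simp
  then have "to_nat w \<le> Max (to_nat ` {w :: ('a + bool) list. length w \<le> Suc n})"
    using a by (intro Max_ge) auto
  then show ?thesis unfolding Wn_def by simp
qed

definition K0 :: "'a list \<Rightarrow> 'a list \<Rightarrow> nat" where
  "K0 A B = (LEAST k. Suc (jst A B) < 2^k)"

lemma K0_prop: "Suc (jst A B) < 2^(K0 A B)" "k < K0 A B \<Longrightarrow> 2^k \<le> Suc (jst A B)"
proof -
  have ex: "Suc (jst A B) < 2^(Suc (jst A B))" by (rule less_exp)
  show "Suc (jst A B) < 2^(K0 A B)" unfolding K0_def by (rule LeastI[where P="\<lambda>k. Suc (jst A B) < 2^k", OF ex])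
  show "k < K0 A B \<Longrightarrow> 2^k \<le> Suc (jst A B)" unfolding K0_def using not_less_Least by (metis not_less)
qed

lemma K0_le: "K0 A B \<le> Suc (jst A B)"
  unfolding K0_def by (rule Least_le) (rule less_exp)

lemma K0_log: "real (K0 A B) \<le> 1 + log 2 (real (jst A B) + 1)"
proof (cases "K0 A B")
  case 0
  then show ?thesis by simp
next
  case (Suc k)
  then have "2^k \<le> Suc (jst A B)" using K0_prop(2)[of k A B] by simp
  then have "real k \<le> log 2 (real (Suc (jst A B)))" by (rule le_log2_of_power)
  then show ?thesis using Suc by (simp add: add.commute)
qed

definition res :: "nat \<Rightarrow> 'a::finite list \<Rightarrow> 'a list \<Rightarrow> nat \<Rightarrow> nat \<Rightarrow> bool list \<Rightarrow> bool" where
  "res W A B i p z = (hsh W 8 to_nat i z (wd (mkA A) p) = hsh W 8 to_nat i z (wd (mkB B) p))"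

lemma wd_eq_iff: "wd (mkA A) p = wd (mkB B) p \<longleftrightarrow> p \<le> jst A B"
  unfolding wd_def using eqw[of A p B] jst_iff[of A p B] by simp

lemma res_true: "p \<le> jst A B \<Longrightarrow> res W A B i p z"
  unfolding res_def using wd_eq_iff by metis

lemma wd_len: "length (wd S p) \<le> length S"
  unfolding wd_def by simp

lemma res_err:
  fixes A B :: "'a::finite list"
  assumes "length A \<le> n" "length B \<le> n" "i < 3"
  shows "Pr (3 * Wn TYPE('a) n * 8) (\<lambda>z. res (Wn TYPE('a) n) A B i p z \<noteq> (p \<le> jst A B)) \<le> 1/256"
proof (cases "p \<le> jst A B")
  case True
  then have "Pr (3 * Wn TYPE('a) n * 8) (\<lambda>z. res (Wn TYPE('a) n) A B i p z \<noteq> (p \<le> jst A B)) = 0"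
    unfolding Pr_def using res_true[OF True] by simp
  then show ?thesis by simp
next
  case False
  have ne: "wd (mkA A) p \<noteq> wd (mkB B) p" using False wd_eq_iff by metis
  have l1: "length (wd (mkA A) p) \<le> Suc n" using wd_len[of "mkA A" p] assms by simp
  have l2: "length (wd (mkB B) p) \<le> Suc n" using wd_len[of "mkB B" p] assms by simp
  have "Pr (3 * Wn TYPE('a) n * 8) (\<lambda>z. res (Wn TYPE('a) n) A B i p z) = 1/2^8"
    unfolding res_def
    by (rule hsh_collision) (use ne Wn_bound[OF l1] Wn_bound[OF l2] assms(3) in auto)
  then show ?thesis using False by simp
qed


lemma amsg_PEx: "amsg W A xs (PEx k) = hsh W 8 to_nat 0 (blk (3*W*8) xs k) (wd (mkA A) (2^k-1))"
  by (simp add: amsg_def)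

lemma ab_PEx: "bmsg W B xs (PEx k) (amsg W A xs (PEx k)) = [res W A B 0 (2^k-1) (blk (3*W*8) xs k)]"
  by (simp add: amsg_def bmsg_def res_def)

lemma amsg_PWk_len: "length (amsg W A xs (PWk K i c h)) = 24"
  by (simp add: amsg_def Let_def)

lemma ab_PWk: "bmsg W B xs (PWk K i c h) (amsg W A xs (PWk K i c h)) =
  [res W A B 0 (c*2^h) (blk (3*W*8) xs (Suc K+i)), res W A B 1 ((c+1)*2^h) (blk (3*W*8) xs (Suc K+i)),
   res W A B 2 ((2*c+1)*2^(h-1)) (blk (3*W*8) xs (Suc K+i))]"
  by (simp add: amsg_def bmsg_def res_def Let_def)

lemma sim_exp: "k \<le> K0 A B \<Longrightarrow> sq W A B xs k = PEx k"
proof (induction k)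
  case (Suc k)
  then have k: "k < K0 A B" by simp
  have "2^k - 1 \<le> jst A B" using K0_prop(2)[OF k] by simp
  then have "res W A B 0 (2^k-1) (blk (3*W*8) xs k)" by (rule res_true)
  then show ?case using Suc k by (simp add: Let_def ab_PEx upd_def)
qed simp

lemma sim_walk0:
  assumes "\<not> res W A B 0 (2^K0 A B - 1) (blk (3*W*8) xs (K0 A B))"
  shows "sq W A B xs (Suc (K0 A B)) = PWk (K0 A B) 0 0 (K0 A B)"
  using assms sim_exp[of "K0 A B" A B W xs] by (simp add: Let_def ab_PEx upd_def)

lemma sim_walk:
  assumes G1: "\<not> res W A B 0 (2^K0 A B - 1) (blk (3*W*8) xs (K0 A B))"
  shows "i < 2 * K0 A B + 6 \<Longrightarrow> sq W A B xs (Suc (K0 A B) + i) =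
    (case wst (K0 A B) (Suc (K0 A B)) (3*W*8) (res W A B) i xs of (c,h) \<Rightarrow> PWk (K0 A B) i c h)"
proof (induction i)
  case 0
  then show ?case using sim_walk0[OF G1] by simp
next
  case (Suc i)
  let ?K = "K0 A B"
  obtain c h where ch: "wst ?K (Suc ?K) (3*W*8) (res W A B) i xs = (c,h)" by fastforce
  have IH: "sq W A B xs (Suc ?K + i) = PWk ?K i c h" using Suc ch by simp
  have ne: "Suc i \<noteq> 2 * ?K + 6" using Suc.prems by simp
  show ?case using IH ne ch
    by (simp add: Let_def ab_PWk upd_def split: prod.splits)
qed

lemma sim_F1:
  assumes G1: "\<not> res W A B 0 (2^K0 A B - 1) (blk (3*W*8) xs (K0 A B))"
  shows "sq W A B xs (Suc (K0 A B) + (2 * K0 A B + 6)) = PF1 (fst (wst (K0 A B) (Suc (K0 A B)) (3*W*8) (res W A B) (2 * K0 A B + 6) xs))"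
proof -
  let ?K = "K0 A B"
  let ?i = "2 * ?K + 5"
  obtain c h where ch: "wst ?K (Suc ?K) (3*W*8) (res W A B) ?i xs = (c,h)" by fastforce
  have IH: "sq W A B xs (Suc ?K + ?i) = PWk ?K ?i c h" using sim_walk[OF G1, of ?i] ch by simp
  have e: "Suc ?K + (2 * ?K + 6) = Suc (Suc ?K + ?i)" "2 * ?K + 6 = Suc ?i" by simp_all
  have X: "sq W A B xs (Suc (Suc ?K + ?i)) = PF1 (fst (wst ?K (Suc ?K) (3*W*8) (res W A B) (Suc ?i) xs))"
    apply (subst sq.simps(2))
    apply (subst wst.simps(2))
    using IH ch by (simp add: Let_def ab_PWk upd_def split: prod.splits)
  show ?thesis using X by (simp add: ac_simps)
qed

lemma sim_end:
  assumes G1: "\<not> res W A B 0 (2^K0 A B - 1) (blk (3*W*8) xs (K0 A B))"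
    and G2: "wst (K0 A B) (Suc (K0 A B)) (3*W*8) (res W A B) (2 * K0 A B + 6) xs = (jst A B, 0)"
  shows "sq W A B xs (Suc (K0 A B) + (2 * K0 A B + 6)) = PF1 (jst A B)"
    "sq W A B xs (Suc (Suc (K0 A B) + (2 * K0 A B + 6))) = PF2 (jst A B) (src (mkA A) (Eb (mkA A) (jst A B)))"
    "sq W A B xs (Suc (Suc (Suc (K0 A B) + (2 * K0 A B + 6)))) = PDn (lcp A B)"
proof -
  let ?N = "Suc (K0 A B) + (2 * K0 A B + 6)"
  show s1: "sq W A B xs ?N = PF1 (jst A B)" using sim_F1[OF G1] G2 by simp
  show s2: "sq W A B xs (Suc ?N) = PF2 (jst A B) (src (mkA A) (Eb (mkA A) (jst A B)))"
    by (subst sq.simps(2)) (use s1 in \<open>simp add: Let_def upd_def amsg_def\<close>)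
  show "sq W A B xs (Suc (Suc ?N)) = PDn (lcp A B)"
    by (subst sq.simps(2)) (use s2 final_formula[where A=A and B=B] in \<open>simp add: Let_def upd_def amsg_def bmsg_def\<close>)
qed


lemma Pr_blk: "(Suc j)*Bs \<le> M \<Longrightarrow> Pr M (\<lambda>xs. P (blk Bs xs j)) = Pr Bs P"
proof -
  assume a: "(Suc j)*Bs \<le> M"
  define rr where "rr = M - Suc j * Bs"
  have M: "M = j*Bs + (Bs + rr)" using a unfolding rr_def by simp
  have "Pr M (\<lambda>xs. P (blk Bs xs j)) = Av (j*Bs) (\<lambda>ys. Av (Bs + rr) (\<lambda>zs. if P (blk Bs (ys@zs) j) then 1 else 0))"
    unfolding Pr_Ex M Av_split ..
  also have "\<dots> = Av (j*Bs) (\<lambda>ys. Av (Bs + rr) (\<lambda>zs. if P (take Bs zs) then 1 else 0))"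
    by (rule Av_cong) (simp add: blk_def)
  also have "\<dots> = Av (j*Bs) (\<lambda>ys. Pr Bs P)"
    unfolding Pr_Ex by (intro Av_cong Av_prefix) simp
  finally show ?thesis by simp
qed

lemma len_bmsg_PEx: "length (bmsg W B xs (PEx k) am) = 1" by (simp add: bmsg_def Let_def)
lemma len_bmsg_PWk: "length (bmsg W B xs (PWk K i c h) am) = 3" by (simp add: bmsg_def Let_def)

lemma bits_exp:
  "k \<le> Suc (K0 A B) \<Longrightarrow> sum_list (map length (trc W A B xs k)) = 9 * k"
proof (induction k)
  case (Suc k)
  then have "sq W A B xs k = PEx k" using sim_exp[of k A B W xs] by simp
  then show ?case using Suc bits_trc_Suc[of W A B xs k] by (simp add: len_bmsg_PEx amsg_PEx)
qed simp

lemma bits_walk: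
  assumes G1: "\<not> res W A B 0 (2^K0 A B - 1) (blk (3*W*8) xs (K0 A B))"
  shows "i \<le> 2 * K0 A B + 6 \<Longrightarrow> sum_list (map length (trc W A B xs (Suc (K0 A B) + i))) = 9 * Suc (K0 A B) + 27 * i"
proof (induction i)
  case 0
  then show ?case using bits_exp[of "Suc (K0 A B)" A B W xs] by simp
next
  case (Suc i)
  obtain c h where ch: "wst (K0 A B) (Suc (K0 A B)) (3*W*8) (res W A B) i xs = (c,h)" by fastforce
  have s: "sq W A B xs (Suc (K0 A B) + i) = PWk (K0 A B) i c h" using sim_walk[OF G1, of i] Suc.prems ch by simp
  have "sum_list (map length (trc W A B xs (Suc (Suc (K0 A B) + i)))) = 9 * Suc (K0 A B) + 27 * i + 24 + 3"
    using bits_trc_Suc[of W A B xs "Suc (K0 A B) + i"] s Suc by (simp add: len_bmsg_PWk amsg_PWk_len)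
  then show ?case by simp
qed

lemma transcript_cong:
  "map r [0..<M] = map r' [0..<M] \<Longrightarrow> transcript (proto W M) A B r k = transcript (proto W M) A B r' k"
proof -
  assume h: "map r [0..<M] = map r' [0..<M]"
  show ?thesis by (induction k) (simp_all add: proto_def Let_def h del: map_eq_conv)
qed

lemma good_run_cong:
  "map r [0..<M] = map r' [0..<M] \<Longrightarrow> good_run (proto W M) A B ans R Bits r = good_run (proto W M) A B ans R Bits r'"
  unfolding good_run_def using transcript_cong[of r M r' W A B]
  by (simp add: proto_def)

definition ext :: "bool list \<Rightarrow> nat \<Rightarrow> bool" where "ext xs i = (if i < length xs then xs!i else False)"

lemma map_ext: "length xs = M \<Longrightarrow> map (ext xs) [0..<M] = xs"
  by (auto simp: ext_def list_eq_iff_nth_eq)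

lemma log_mono2: "(x::nat) \<le> y \<Longrightarrow> log 2 (real x + 1) \<le> log 2 (real y + 1)"
  by simp

lemma log_nonneg2: "0 \<le> log 2 (real (x::nat) + 1)"
  by simp

lemma main_good:
  fixes A B :: "'a::finite list"
  assumes lA: "length A \<le> n" and lB: "length B \<le> n"
  defines "W \<equiv> Wn TYPE('a) n"
  defines "M \<equiv> (3*n+10) * (3*W*8)"
  assumes len: "length xs = M"
    and G1: "\<not> res W A B 0 (2^K0 A B - 1) (blk (3*W*8) xs (K0 A B))"
    and G2: "wst (K0 A B) (Suc (K0 A B)) (3*W*8) (res W A B) (2 * K0 A B + 6) xs = (jst A B, 0)"
  shows "good_run (proto W M) A B (lcp A B) (240 * (1 + log 2 (real (lz_phrases (take (lcp A B) A)) + 1)))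
           (240 * (1 + log 2 (real (lcp A B) + 1))) (ext xs)"
proof -
  let ?K = "K0 A B" and ?t = "jst A B" and ?l = "lcp A B" and ?z = "lz_phrases (take (lcp A B) A)"
  let ?N = "Suc ?K + (2 * ?K + 6)"
  let ?s = "src (mkA A) (Eb (mkA A) ?t)" and ?k = "lstar (mkA A) (Eb (mkA A) ?t)"
  have mx: "map (ext xs) [0..<M] = xs" by (rule map_ext[OF len])
  note se = sim_end[OF G1 G2]
  have nd: "\<forall>i<Suc (Suc ?N). \<not> isDn (sq W A B xs i)"
  proof (intro allI impI)
    fix i assume i: "i < Suc (Suc ?N)"
    show "\<not> isDn (sq W A B xs i)"
    proof (cases "i \<le> ?K")
      case True
      then show ?thesis using sim_exp[OF True] by (simp add: isDn_def)
    next
      case False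
      then obtain j where j: "i = Suc ?K + j" by (metis add_Suc less_imp_Suc_add not_le)
      show ?thesis
      proof (cases "j < 2 * ?K + 6")
        case True
        then show ?thesis using sim_walk[OF G1 True] j by (simp add: isDn_def split: prod.splits)
      next
        case F2: False
        then have "i = ?N \<or> i = Suc ?N" using i j by linarith
        then show ?thesis using se by (auto simp: isDn_def)
      qed
    qed
  qed
  have bw: "sum_list (map length (trc W A B xs ?N)) = 9 * Suc ?K + 27 * (2 * ?K + 6)"
    by (rule bits_walk[OF G1]) simp
  have b1: "sum_list (map length (trc W A B xs (Suc ?N))) = 9 * Suc ?K + 27 * (2 * ?K + 6) + length (bin ?s)"
    using bits_trc_Suc[of W A B xs ?N] bw se(1) by (simp add: amsg_def bmsg_def Let_def)
  have ff: "Eb (mkB B) ?t + lcpr (drop (Eb (mkB B) ?t) (mkB B)) (take ?k (drop ?s (mkB B))) = ?l"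
    using final_formula[where A=A and B=B] by simp
  have b2: "sum_list (map length (trc W A B xs (Suc (Suc ?N)))) = 9 * Suc ?K + 27 * (2 * ?K + 6) + length (bin ?s)
      + length (bin ?k) + length (bin ?l)"
    using bits_trc_Suc[of W A B xs "Suc ?N"] b1 se(2) ff by (simp add: amsg_def bmsg_def Let_def)
  let ?L = "log 2 (real ?l + 1)" and ?Z = "log 2 (real ?z + 1)"
  have tz: "?t \<le> ?z" by (rule jst_le_z)
  have tl: "?t \<le> ?l" by (rule jst_le_lcp)
  have KZ: "real ?K \<le> 1 + ?Z" using K0_log[of A B] log_mono2[OF tz] by linarith
  have KL: "real ?K \<le> 1 + ?L" using K0_log[of A B] log_mono2[OF tl] by linarith
  have Z0: "0 \<le> ?Z" and L0: "0 \<le> ?L" by (rule log_nonneg2)+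
  have bs: "real (length (bin ?s)) \<le> 1 + ?L"
    using bin_len_log[of ?s] log_mono2[OF final_formula(3)[where A=A and B=B]] by linarith
  have bk: "real (length (bin ?k)) \<le> 1 + ?L"
    using bin_len_log[of ?k] log_mono2[OF final_formula(4)[where A=A and B=B]] by linarith
  have bl: "real (length (bin ?l)) \<le> 1 + ?L" using bin_len_log[of ?l] by simp
  show ?thesis
  proof (rule good_run_trc[where k="Suc (Suc ?N)"])
    show "\<forall>i<Suc (Suc ?N). \<not> isDn (sq W A B (map (ext xs) [0..<M]) i)" using nd mx by simp
    show "sq W A B (map (ext xs) [0..<M]) (Suc (Suc ?N)) = PDn ?l" using se(3) mx by simp
    have "real (2 * Suc (Suc ?N)) = 6 * real ?K + 18" by simp
    moreover have "240 * (1 + ?Z) = 240 + 240 * ?Z" by (simp add: algebra_simps)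
    ultimately show "real (2 * Suc (Suc ?N)) \<le> 240 * (1 + ?Z)" using KZ Z0 by linarith
    have "real (sum_list (map length (trc W A B (map (ext xs) [0..<M]) (Suc (Suc ?N)))))
       = 9 * (1 + real ?K) + 27 * (2 * real ?K + 6) + real (length (bin ?s)) + real (length (bin ?k)) + real (length (bin ?l))"
      using b2 mx by simp
    also have "\<dots> \<le> 240 * (1 + ?L)"
    proof -
      have e1: "240 * (1 + ?L) = 240 + 240 * ?L" by (simp add: algebra_simps)
      have e2: "9 * (1 + real ?K) + 27 * (2 * real ?K + 6) + real (length (bin ?s)) + real (length (bin ?k)) + real (length (bin ?l))
         = 171 + 63 * real ?K + real (length (bin ?s)) + real (length (bin ?k)) + real (length (bin ?l))"
        by (simp add: algebra_simps)
      show ?thesis unfolding e1 e2 using KL bs bk bl L0 by linarith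
    qed
    finally show "real (sum_list (map length (trc W A B (map (ext xs) [0..<M]) (Suc (Suc ?N))))) \<le> 240 * (1 + ?L)" .
  qed
qed


theorem theorem1:
  fixes dummy :: "'a :: finite itself"
  shows "\<exists>c::real. c > 0 \<and> (\<exists>p::real. p > 1/2 \<and>
     (\<forall>n::nat. \<exists>P :: 'a protocol.
        \<forall>A B :: 'a list. length A \<le> n \<and> length B \<le> n \<longrightarrow>
          (let l = lcp A B; z = lz_phrases (take l A) in
           measure coins {r \<in> space coins.
              good_run P A B l (c * (1 + log 2 (real z + 1))) (c * (1 + log 2 (real l + 1))) r}
           \<ge> p)))"
proof -
  have main: "\<forall>n::nat. \<exists>P :: 'a protocol.
        \<forall>A B :: 'a list. length A \<le> n \<and> length B \<le> n \<longrightarrow>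
          (let l = lcp A B; z = lz_phrases (take l A) in
           measure coins {r \<in> space coins.
              good_run P A B l (240 * (1 + log 2 (real z + 1))) (240 * (1 + log 2 (real l + 1))) r}
           \<ge> 3/4)"
  proof
  fix n :: nat
  define W where "W = Wn TYPE('a) n"
  define M where "M = (3*n+10) * (3*W*8)"
  show "\<exists>P :: 'a protocol. \<forall>A B :: 'a list. length A \<le> n \<and> length B \<le> n \<longrightarrow>
          (let l = lcp A B; z = lz_phrases (take l A) in
           measure coins {r \<in> space coins.
              good_run P A B l (240 * (1 + log 2 (real z + 1))) (240 * (1 + log 2 (real l + 1))) r}
           \<ge> 3/4)"
  proof (intro exI[of _ "proto W M"] allI impI)
    fix A B :: "'a list"
    assume lAB: "length A \<le> n \<and> length B \<le> n"
    let ?l = "lcp A B" and ?z = "lz_phrases (take (lcp A B) A)"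
    let ?R = "240 * (1 + log 2 (real ?z + 1))" and ?Bi = "240 * (1 + log 2 (real ?l + 1))"
    let ?K = "K0 A B" and ?t = "jst A B" and ?Bs = "3*W*8"
    define Q where "Q xs = good_run (proto W M) A B ?l ?R ?Bi (ext xs)" for xs
    define G1 where "G1 xs = (\<not> res W A B 0 (2^?K - 1) (blk ?Bs xs ?K))" for xs
    define G2 where "G2 xs = (wst ?K (Suc ?K) ?Bs (res W A B) (2 * ?K + 6) xs = (?t, 0))" for xs
    have set_eq: "{r \<in> space coins. good_run (proto W M) A B ?l ?R ?Bi r} = {r \<in> space coins. Q (map r [0..<M])}"
    proof -
      have "good_run (proto W M) A B ?l ?R ?Bi r = Q (map r [0..<M])" for r
        unfolding Q_def by (rule good_run_cong) (simp add: map_ext)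
      then show ?thesis by simp
    qed
    have Kle: "?K \<le> Suc n" using K0_le[of A B] jst_le_lcp[of A B] lcp_le[of A B] lAB by linarith
    have M1: "Suc ?K * ?Bs \<le> M" unfolding M_def using Kle by (intro mult_le_mono1) simp
    have M2: "(Suc ?K + (2 * ?K + 6)) * ?Bs \<le> M" unfolding M_def using Kle by (intro mult_le_mono1) simp
    have tK: "?t < 2^?K" using K0_prop(1)[of A B] by simp
    have err: "\<And>i p. i < 3 \<Longrightarrow> Pr ?Bs (\<lambda>z. res W A B i p z \<noteq> (p \<le> ?t)) \<le> 1/256"
      unfolding W_def using res_err lAB by blast
    have pG1: "Pr M (\<lambda>xs. \<not> G1 xs) \<le> 1/256"
    proof -
      have nt: "\<not> (2^?K - 1 \<le> ?t)" using K0_prop(1)[of A B] by simp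
      have "Pr M (\<lambda>xs. \<not> G1 xs) = Pr ?Bs (res W A B 0 (2^?K - 1))"
        unfolding G1_def using Pr_blk[OF M1, of "res W A B 0 (2^?K - 1)"] by simp
      also have "\<dots> = Pr ?Bs (\<lambda>z. res W A B 0 (2^?K - 1) z \<noteq> (2^?K - 1 \<le> ?t))" using nt by simp
      also have "\<dots> \<le> 1/256" by (rule err) simp
      finally show ?thesis .
    qed
    have pG2: "Pr M (\<lambda>xs. \<not> G2 xs) \<le> 1/10"
      unfolding G2_def by (rule walk_fail[OF tK err M2])
    have good: "Q xs" if g: "length xs = M" "G1 xs" "G2 xs" for xs
    proof -
      note mg = main_good[where A=A and B=B and n=n and xs=xs, folded W_def, folded M_def]
      show ?thesis unfolding Q_def
        by (rule mg[OF conjunct1[OF lAB] conjunct2[OF lAB] g(1) g(2)[unfolded G1_def] g(3)[unfolded G2_def]])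
    qed
    have "3/4 \<le> 1 - (Pr M (\<lambda>xs. \<not> G1 xs) + Pr M (\<lambda>xs. \<not> G2 xs))" using pG1 pG2 by linarith
    also have "\<dots> \<le> 1 - Pr M (\<lambda>xs. \<not> G1 xs \<or> \<not> G2 xs)" using Pr_union[of M "\<lambda>xs. \<not> G1 xs" "\<lambda>xs. \<not> G2 xs"] by linarith
    also have "\<dots> = Pr M (\<lambda>xs. \<not> (\<not> G1 xs \<or> \<not> G2 xs))" by (rule Pr_compl[symmetric])
    also have "\<dots> \<le> Pr M Q" by (rule Pr_mono) (use good in auto)
    also have "\<dots> = measure coins {r \<in> space coins. good_run (proto W M) A B ?l ?R ?Bi r}"
      unfolding set_eq by (rule bridge[symmetric])
    finally show "let l = lcp A B; z = lz_phrases (take l A) in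
           measure coins {r \<in> space coins.
              good_run (proto W M) A B l (240 * (1 + log 2 (real z + 1))) (240 * (1 + log 2 (real l + 1))) r}
           \<ge> 3/4" by simp
  qed
  qed
  show ?thesis by (rule exI[of _ 240], rule conjI, simp, rule exI[of _ "3/4"], rule conjI, simp, rule main)
qed


end
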